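(* Let $A$ and $B$ be bounded self-adjoint operators such that $A\ge-\tfrac12$, $B\ge-\tfrac12$ and $A+B\ge-\tfrac12$. Then $$\|\log(\mathrm{id}+A+B)-\log(\mathrm{id}+A)-\log(\mathrm{id}+B)\|\le C\|AB\|$$ for some constant $C$ independent of $A$ and $B$. *)

theory Defs
  imports "HOL-Analysis.Analysis"
begin

definition selfadjoint :: "('a::real_inner \<Rightarrow>\<^sub>L 'a) \<Rightarrow> bool" where
  "selfadjoint A \<longleftrightarrow> (\<forall>x y. inner (blinfun_apply A x) y = inner x (blinfun_apply A y))"

text \<open>Operator inequality  A \<ge> c * id  (in the quadratic form sense).\<close>
definition op_ge_scalar :: "('a::real_inner \<Rightarrow>\<^sub>L 'a) \<Rightarrow> real \<Rightarrow> bool" where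
  "op_ge_scalar A c \<longleftrightarrow> (\<forall>x. inner (blinfun_apply A x) x \<ge> c * (norm x)\<^sup>2)"

fun op_pow :: "('a::real_normed_vector \<Rightarrow>\<^sub>L 'a) \<Rightarrow> nat \<Rightarrow> ('a \<Rightarrow>\<^sub>L 'a)" where
  "op_pow L 0 = id_blinfun"
| "op_pow L (Suc n) = L o\<^sub>L op_pow L n"

definition op_exp :: "('a::banach \<Rightarrow>\<^sub>L 'a) \<Rightarrow> ('a \<Rightarrow>\<^sub>L 'a)" where
  "op_exp L = (\<Sum>n. (1 / fact n) *\<^sub>R op_pow L n)"

text \<open>The (self-adjoint) operator logarithm: the unique self-adjoint L with exp L = X
  (exists and is unique for self-adjoint X \<ge> c > 0).\<close>
definition op_log :: "('a::{real_inner,banach} \<Rightarrow>\<^sub>L 'a) \<Rightarrow> ('a \<Rightarrow>\<^sub>L 'a)" where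
  "op_log X = (THE L. selfadjoint L \<and> op_exp L = X)"

end

theory Submission
  imports Defs
begin


lemma bc_assoc: "(a o\<^sub>L b) o\<^sub>L c = a o\<^sub>L (b o\<^sub>L c)"
  by (rule blinfun_eqI) simp
lemma bc_add_left: "(a + b) o\<^sub>L c = (a o\<^sub>L c) + (b o\<^sub>L c)"
  by (rule blinfun_eqI) (simp add: blinfun.bilinear_simps)
lemma bc_add_right: "c o\<^sub>L (a + b) = (c o\<^sub>L a) + (c o\<^sub>L b)"
  by (rule blinfun_eqI) (simp add: blinfun.bilinear_simps)
lemma bc_diff_left: "(a - b) o\<^sub>L c = (a o\<^sub>L c) - (b o\<^sub>L c)"
  by (rule blinfun_eqI) (simp add: blinfun.bilinear_simps)
lemma bc_diff_right: "c o\<^sub>L (a - b) = (c o\<^sub>L a) - (c o\<^sub>L b)"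
  by (rule blinfun_eqI) (simp add: blinfun.bilinear_simps)
lemma bc_minus_left: "(- a) o\<^sub>L c = - (a o\<^sub>L c)"
  by (rule blinfun_eqI) (simp add: blinfun.bilinear_simps)
lemma bc_minus_right: "c o\<^sub>L (- a) = - (c o\<^sub>L a)"
  by (rule blinfun_eqI) (simp add: blinfun.bilinear_simps)
lemma bc_scaleR_left: "(r *\<^sub>R a) o\<^sub>L c = r *\<^sub>R (a o\<^sub>L c)"
  by (rule blinfun_eqI) (simp add: blinfun.bilinear_simps)
lemma bc_scaleR_right: "c o\<^sub>L (r *\<^sub>R a) = r *\<^sub>R (c o\<^sub>L a)"
  by (rule blinfun_eqI) (simp add: blinfun.bilinear_simps)
lemma bc_id_left[simp]: "id_blinfun o\<^sub>L a = a"
  by (rule blinfun_eqI) simp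
lemma bc_id_right[simp]: "a o\<^sub>L id_blinfun = a"
  by (rule blinfun_eqI) simp

lemmas bc_simps = bc_assoc bc_add_left bc_add_right bc_diff_left bc_diff_right
  bc_minus_left bc_minus_right bc_scaleR_left bc_scaleR_right

section \<open>Unitization\<close>

lemma U_mult_aux: "norm ((x o\<^sub>L y) + r *\<^sub>R y + s *\<^sub>R x) + \<bar>r * s\<bar> \<le> (norm x + \<bar>r\<bar>) * (norm (y::'a::real_normed_vector \<Rightarrow>\<^sub>L 'a) + \<bar>s\<bar>)"
proof -
  have "norm ((x o\<^sub>L y) + r *\<^sub>R y + s *\<^sub>R x) \<le> norm (x o\<^sub>L y) + norm (r *\<^sub>R y) + norm (s *\<^sub>R x)"
    by (intro order_trans[OF norm_triangle_ineq] add_mono) (auto intro: norm_triangle_ineq)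
  also have "\<dots> \<le> norm x * norm y + \<bar>r\<bar> * norm y + \<bar>s\<bar> * norm x"
    using norm_blinfun_compose[of x y] by simp
  finally show ?thesis
    by (simp add: algebra_simps abs_mult)
qed

typedef (overloaded) 'a U = "UNIV :: (('a::real_normed_vector \<Rightarrow>\<^sub>L 'a) \<times> real) set"
  by auto

setup_lifting type_definition_U

instantiation U :: (real_normed_vector) real_normed_vector
begin

lift_definition zero_U :: "'a U" is "(0, 0)" .
lift_definition plus_U :: "'a U \<Rightarrow> 'a U \<Rightarrow> 'a U" is "\<lambda>(a, r) (b, s). (a + b, r + s)" .
lift_definition minus_U :: "'a U \<Rightarrow> 'a U \<Rightarrow> 'a U" is "\<lambda>(a, r) (b, s). (a - b, r - s)" .
lift_definition uminus_U :: "'a U \<Rightarrow> 'a U" is "\<lambda>(a, r). (- a, - r)" .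
lift_definition scaleR_U :: "real \<Rightarrow> 'a U \<Rightarrow> 'a U" is "\<lambda>c (a, r). (c *\<^sub>R a, c * r)" .
lift_definition norm_U :: "'a U \<Rightarrow> real" is "\<lambda>(a, r). norm a + abs r" .

definition dist_U :: "'a U \<Rightarrow> 'a U \<Rightarrow> real"
  where "dist_U a b = norm (a - b)"

definition uniformity_U :: "('a U \<times> 'a U) filter"
  where "uniformity_U = (INF e\<in>{0 <..}. principal {(x, y). dist x y < e})"

definition open_U :: "'a U set \<Rightarrow> bool"
  where "open_U S = (\<forall>x\<in>S. \<forall>\<^sub>F (x', y) in uniformity. x' = x \<longrightarrow> y \<in> S)"

definition sgn_U :: "'a U \<Rightarrow> 'a U"
  where "sgn_U x = scaleR (inverse (norm x)) x"

instance
proof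
  fix a b c :: "'a U" and r s :: real
  show "a + b + c = a + (b + c)" by transfer auto
  show "a + b = b + a" by transfer auto
  show "0 + a = a" by transfer auto
  show "- a + a = 0" by transfer auto
  show "a - b = a + - b" by transfer auto
  show "r *\<^sub>R (a + b) = r *\<^sub>R a + r *\<^sub>R b" by transfer (auto simp: algebra_simps)
  show "(r + s) *\<^sub>R a = r *\<^sub>R a + s *\<^sub>R a" by transfer (auto simp: algebra_simps)
  show "r *\<^sub>R s *\<^sub>R a = (r * s) *\<^sub>R a" by transfer auto
  show "1 *\<^sub>R a = a" by transfer auto
  show "dist a b = norm (a - b)" by (simp add: dist_U_def)
  show "sgn a = inverse (norm a) *\<^sub>R a" by (simp add: sgn_U_def)
  show "(uniformity :: ('a U \<times> 'a U) filter) = (INF e\<in>{0 <..}. principal {(x, y). dist x y < e})"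
    by (simp add: uniformity_U_def)
  fix S :: "'a U set"
  show "open S = (\<forall>x\<in>S. \<forall>\<^sub>F (x', y) in uniformity. x' = x \<longrightarrow> y \<in> S)"
    by (simp add: open_U_def)
  show "(norm a = 0) = (a = 0)"
    by transfer (auto simp: add_nonneg_eq_0_iff)
  show "norm (a + b) \<le> norm a + norm b"
    by transfer (clarsimp, smt (verit) norm_triangle_ineq abs_triangle_ineq)
  show "norm (r *\<^sub>R a) = \<bar>r\<bar> * norm a"
    by transfer (auto simp: abs_mult algebra_simps)
qed
end

instantiation U :: (real_normed_vector) real_normed_algebra_1
begin

lift_definition one_U :: "'a U" is "(0, 1)" .
lift_definition times_U :: "'a U \<Rightarrow> 'a U \<Rightarrow> 'a U"
  is "\<lambda>(a, r) (b, s). ((a o\<^sub>L b) + r *\<^sub>R b + s *\<^sub>R a, r * s)" .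

instance
proof
  fix a b c :: "'a U" and r :: real
  show "a * b * c = a * (b * c)"
    by transfer (auto simp: bc_simps algebra_simps)
  show "1 * a = a" by transfer auto
  show "a * 1 = a" by transfer auto
  show "(a + b) * c = a * c + b * c"
    by transfer (auto simp: bc_simps algebra_simps)
  show "a * (b + c) = a * b + a * c"
    by transfer (auto simp: bc_simps algebra_simps)
  show "(0::'a U) \<noteq> 1" by transfer auto
  show "r *\<^sub>R a * b = r *\<^sub>R (a * b)"
    by transfer (auto simp: bc_simps algebra_simps)
  show "a * r *\<^sub>R b = r *\<^sub>R (a * b)"
    by transfer (auto simp: bc_simps algebra_simps)
  show "norm (1::'a U) = 1" by transfer auto
  show "norm (a * b) \<le> norm a * norm b"
    by transfer (clarsimp simp: U_mult_aux)
qed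
end


lift_definition Ufst :: "'a::real_normed_vector U \<Rightarrow> ('a \<Rightarrow>\<^sub>L 'a)" is "fst :: ('a \<Rightarrow>\<^sub>L 'a) \<times> real \<Rightarrow> ('a \<Rightarrow>\<^sub>L 'a)" .
lift_definition Usnd :: "'a::real_normed_vector U \<Rightarrow> real" is "snd :: ('a \<Rightarrow>\<^sub>L 'a) \<times> real \<Rightarrow> real" .
lift_definition mkU :: "('a::real_normed_vector \<Rightarrow>\<^sub>L 'a) \<Rightarrow> real \<Rightarrow> 'a U" is "Pair :: ('a \<Rightarrow>\<^sub>L 'a) \<Rightarrow> real \<Rightarrow> ('a \<Rightarrow>\<^sub>L 'a) \<times> real" .
lift_definition EU :: "('a::real_normed_vector \<Rightarrow>\<^sub>L 'a) \<Rightarrow> 'a U" is "\<lambda>a::('a \<Rightarrow>\<^sub>L 'a). (a, 0::real)" .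

lemma Ufst_mkU[simp]: "Ufst (mkU a r) = a" by transfer simp
lemma Usnd_mkU[simp]: "Usnd (mkU a r) = r" by transfer simp
lemma mkU_split: "mkU (Ufst u) (Usnd u) = u" by transfer simp
lemma norm_mkU: "norm (mkU a r) = norm a + abs r" by transfer simp
lemma mkU_minus: "mkU a r - mkU b s = mkU (a - b) (r - s)" by transfer simp
lemma Ufst_norm: "norm (Ufst u) \<le> norm u" by transfer auto
lemma Usnd_norm: "abs (Usnd u) \<le> norm u" by transfer auto

lemma bounded_linear_Ufst: "bounded_linear Ufst"
  by (rule bounded_linear_intro[where K=1]) (transfer, auto)+
lemma bounded_linear_Usnd: "bounded_linear Usnd"
  by (rule bounded_linear_intro[where K=1]) (transfer, auto)+

lemma EU_add: "EU (a + b) = EU a + EU b" by transfer simp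
lemma EU_diff: "EU (a - b) = EU a - EU b" by transfer simp
lemma EU_scaleR: "EU (r *\<^sub>R a) = r *\<^sub>R EU a" by transfer simp
lemma EU_zero: "EU 0 = 0" by transfer simp
lemma EU_mult: "EU a * EU b = EU (a o\<^sub>L b)" by transfer simp
lemma EU_inj: "EU a = EU b \<longleftrightarrow> a = b" by transfer simp
lemma norm_EU: "norm (EU a) = norm a" by transfer simp
lemma Ufst_EU[simp]: "Ufst (EU a) = a" by transfer simp
lemma Usnd_EU[simp]: "Usnd (EU a) = 0" by transfer simp
lemma Ufst_one[simp]: "Ufst 1 = 0" by transfer simp
lemma Usnd_one[simp]: "Usnd 1 = 1" by transfer simp
lemma Ufst_add: "Ufst (a + b) = Ufst a + Ufst b" by transfer (simp add: case_prod_beta)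
lemma Ufst_scaleR: "Ufst (r *\<^sub>R a) = r *\<^sub>R Ufst a" by transfer (simp add: case_prod_beta)
lemma Usnd_scaleR: "Usnd (r *\<^sub>R a) = r * Usnd a" by transfer (simp add: case_prod_beta)
lemma Ufst_EU_mult_one: "Ufst ((EU a + 1) * EU b) = (a o\<^sub>L b) + b" by transfer simp
lemma EU_plus_one: "EU a + 1 = mkU a 1" by transfer simp

instance U :: (banach) banach
proof
  fix X :: "nat \<Rightarrow> 'a U"
  assume X: "Cauchy X"
  have "Cauchy (\<lambda>n. Ufst (X n))"
    using bounded_linear.Cauchy[OF bounded_linear_Ufst X] .
  then obtain f where f: "(\<lambda>n. Ufst (X n)) \<longlonglongrightarrow> f"
    using Cauchy_convergent_iff convergent_def by blast
  have "Cauchy (\<lambda>n. Usnd (X n))"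
    using bounded_linear.Cauchy[OF bounded_linear_Usnd X] .
  then obtain g where g: "(\<lambda>n. Usnd (X n)) \<longlonglongrightarrow> g"
    using Cauchy_convergent_iff convergent_def by blast
  have "(\<lambda>n. norm (Ufst (X n) - f) + norm (Usnd (X n) - g)) \<longlonglongrightarrow> 0 + 0"
    by (intro tendsto_add tendsto_norm_zero LIM_zero f g)
  moreover have "norm (X n - mkU f g) = norm (Ufst (X n) - f) + norm (Usnd (X n) - g)" for n
    by (subst mkU_split[of "X n", symmetric], subst mkU_minus) (simp add: norm_mkU)
  ultimately have "(\<lambda>n. norm (X n - mkU f g)) \<longlonglongrightarrow> 0" by simp
  then have "X \<longlonglongrightarrow> mkU f g"
    using tendsto_norm_zero_iff LIM_zero_cancel by blast
  then show "convergent X" unfolding convergent_def by blast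
qed

section \<open>Exponential via the unitization\<close>

lemma EU_power: "n > 0 \<Longrightarrow> (EU L) ^ n = EU (op_pow L n)"
proof (induction n)
  case 0 then show ?case by simp
next
  case (Suc n)
  show ?case
  proof (cases "n = 0")
    case True then show ?thesis by simp
  next
    case False
    then have "(EU L) ^ n = EU (op_pow L n)" using Suc by simp
    then show ?thesis by (simp add: EU_mult)
  qed
qed

lemma op_exp_EU:
  fixes L :: "'a::banach \<Rightarrow>\<^sub>L 'a"
  shows "exp (EU L) = EU (op_exp L - id_blinfun) + 1"
proof -
  have sm: "summable (\<lambda>n. (EU L)^n /\<^sub>R fact n)" by (rule summable_exp_generic)
  have s: "(\<lambda>n. (EU L)^n /\<^sub>R fact n) sums exp (EU L)"
    using sm by (simp add: exp_def summable_sums)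
  have s1: "(\<lambda>n. Ufst ((EU L)^n /\<^sub>R fact n)) sums Ufst (exp (EU L))"
    by (rule bounded_linear.sums[OF bounded_linear_Ufst s])
  have s2: "(\<lambda>n. Usnd ((EU L)^n /\<^sub>R fact n)) sums Usnd (exp (EU L))"
    by (rule bounded_linear.sums[OF bounded_linear_Usnd s])
  have e1: "Ufst ((EU L)^n /\<^sub>R fact n) + (if n = 0 then id_blinfun else 0) = (1 / fact n) *\<^sub>R op_pow L n" for n
  proof (cases "n = 0")
    case True then show ?thesis by simp
  next
    case False then show ?thesis
      by (simp add: EU_power Ufst_scaleR divide_inverse_commute)
  qed
  have e2: "Usnd ((EU L)^n /\<^sub>R fact n) = (if n = 0 then 1 else 0)" for n
  proof (cases "n = 0")
    case True then show ?thesis by simp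
  next
    case False then show ?thesis
      by (simp add: EU_power Usnd_scaleR)
  qed
  have "(\<lambda>n. Ufst ((EU L)^n /\<^sub>R fact n) + (if n = 0 then id_blinfun else 0)) sums (Ufst (exp (EU L)) + id_blinfun)"
    by (intro sums_add s1) (rule sums_single[of 0 "\<lambda>_. id_blinfun", simplified])
  then have "(\<lambda>n. (1 / fact n) *\<^sub>R op_pow L n) sums (Ufst (exp (EU L)) + id_blinfun)"
    using e1 by simp
  then have f: "op_exp L = Ufst (exp (EU L)) + id_blinfun"
    unfolding op_exp_def by (rule sums_unique[symmetric])
  have "(\<lambda>n. (if n = 0 then 1 else 0)::real) sums 1"
    by (rule sums_single[of 0 "\<lambda>_. 1::real", simplified])
  then have g: "Usnd (exp (EU L)) = 1"
    using s2 e2 by (simp add: sums_unique2)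
  show ?thesis
    by (subst mkU_split[of "exp (EU L)", symmetric]) (simp add: f g EU_plus_one)
qed

lemma op_exp_Ufst: "op_exp L = Ufst (exp (EU L)) + id_blinfun"
  by (simp add: op_exp_EU[of L] Ufst_add)

lemma op_exp_add:
  fixes L M :: "'a::banach \<Rightarrow>\<^sub>L 'a"
  assumes "L o\<^sub>L M = M o\<^sub>L L"
  shows "op_exp (L + M) = op_exp L o\<^sub>L op_exp M"
proof -
  define x where "x = op_exp L - id_blinfun"
  define y where "y = op_exp M - id_blinfun"
  have "EU L * EU M = EU M * EU L" by (simp add: EU_mult assms)
  then have "exp (EU L + EU M) = exp (EU L) * exp (EU M)" by (rule exp_add_commuting)
  then have "EU (op_exp (L + M) - id_blinfun) + 1 = (EU x + 1) * (EU y + 1)"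
    by (simp add: op_exp_EU EU_add[symmetric] x_def y_def)
  also have "\<dots> = EU x * EU y + EU x + EU y + 1"
    by (simp add: algebra_simps)
  also have "\<dots> = EU ((x o\<^sub>L y) + x + y) + 1"
    by (simp add: EU_mult EU_add)
  finally have "op_exp (L + M) - id_blinfun = (x o\<^sub>L y) + x + y"
    by (simp add: EU_inj)
  then show ?thesis by (simp add: bc_simps algebra_simps x_def y_def)
qed

lemma op_exp_zero: "op_exp (0::'a::banach \<Rightarrow>\<^sub>L 'a) = id_blinfun"
  using op_exp_Ufst[of "0::'a \<Rightarrow>\<^sub>L 'a"] by (simp add: EU_zero)

lemma norm_op_exp: "norm (op_exp (L::'a::banach \<Rightarrow>\<^sub>L 'a)) \<le> exp (norm L) + 1"
proof -
  have "norm (op_exp L) \<le> norm (Ufst (exp (EU L))) + norm (id_blinfun::'a \<Rightarrow>\<^sub>L 'a)"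
    unfolding op_exp_Ufst by (rule norm_triangle_ineq)
  also have "\<dots> \<le> exp (norm L) + 1"
    using Ufst_norm[of "exp (EU L)"] norm_exp[of "EU L"] norm_blinfun_id_le[where 'a='a]
    unfolding norm_EU by linarith
  finally show ?thesis .
qed

lemma op_exp_deriv:
  fixes L :: "'a::banach \<Rightarrow>\<^sub>L 'a"
  shows "((\<lambda>s. op_exp (s *\<^sub>R L)) has_vector_derivative (op_exp (s *\<^sub>R L) o\<^sub>L L)) (at s within T)"
proof -
  have "((\<lambda>t. exp (t *\<^sub>R EU L)) has_vector_derivative exp (s *\<^sub>R EU L) * EU L) (at s within T)"
    by (rule exp_scaleR_has_vector_derivative_right)
  then have "((\<lambda>t. Ufst (exp (t *\<^sub>R EU L)) + id_blinfun) has_vector_derivative Ufst (exp (s *\<^sub>R EU L) * EU L) + 0) (at s within T)"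
    by (intro has_vector_derivative_add has_vector_derivative_const bounded_linear.has_vector_derivative[OF bounded_linear_Ufst])
  moreover have "Ufst (exp (s *\<^sub>R EU L) * EU L) = op_exp (s *\<^sub>R L) o\<^sub>L L"
  proof -
    have "exp (s *\<^sub>R EU L) = EU (op_exp (s *\<^sub>R L) - id_blinfun) + 1"
      using op_exp_EU[of "s *\<^sub>R L"] by (simp add: EU_scaleR)
    then show ?thesis by (simp add: Ufst_EU_mult_one bc_simps)
  qed
  moreover have "(\<lambda>t. Ufst (exp (t *\<^sub>R EU L)) + id_blinfun) = (\<lambda>t. op_exp (t *\<^sub>R L))"
    by (rule ext) (simp add: op_exp_Ufst EU_scaleR)
  ultimately show ?thesis by simp
qed



lemma bl_inner1: "bounded_linear (\<lambda>T::'a::real_inner \<Rightarrow>\<^sub>L 'a. inner (T x) y)"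
  by (rule bounded_linear_compose[OF bounded_linear_inner_left blinfun.bounded_linear_left])

lemma bl_inner2: "bounded_linear (\<lambda>T::'a::real_inner \<Rightarrow>\<^sub>L 'a. inner x (T y))"
  by (rule bounded_linear_compose[OF bounded_linear_inner_right blinfun.bounded_linear_left])

lemma bl_compose_left: "bounded_linear (\<lambda>X. A o\<^sub>L X)"
  by (rule bounded_bilinear.bounded_linear_right[OF bounded_bilinear_blinfun_compose])

lemma bl_compose_right: "bounded_linear (\<lambda>X. X o\<^sub>L A)"
  by (rule bounded_bilinear.bounded_linear_left[OF bounded_bilinear_blinfun_compose])

lemma saD: "selfadjoint A \<Longrightarrow> inner (A x) y = inner x (A y)"
  by (simp add: selfadjoint_def)

lemma sa_add: "selfadjoint A \<Longrightarrow> selfadjoint B \<Longrightarrow> selfadjoint (A + B)"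
  by (simp add: selfadjoint_def blinfun.bilinear_simps inner_add_left inner_add_right)

lemma sa_diff: "selfadjoint A \<Longrightarrow> selfadjoint B \<Longrightarrow> selfadjoint (A - B)"
  by (simp add: selfadjoint_def blinfun.bilinear_simps inner_diff_left inner_diff_right)

lemma sa_scaleR: "selfadjoint A \<Longrightarrow> selfadjoint (r *\<^sub>R A)"
  by (simp add: selfadjoint_def blinfun.bilinear_simps)

lemma sa_uminus: "selfadjoint A \<Longrightarrow> selfadjoint (- A)"
  by (simp add: selfadjoint_def blinfun.bilinear_simps)

lemma sa_id: "selfadjoint id_blinfun"
  by (simp add: selfadjoint_def)

lemma sa_zero: "selfadjoint 0"
  by (simp add: selfadjoint_def)

lemma sa_compose:
  "selfadjoint A \<Longrightarrow> selfadjoint B \<Longrightarrow> A o\<^sub>L B = B o\<^sub>L A \<Longrightarrow> selfadjoint (A o\<^sub>L B)"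
  unfolding selfadjoint_def
  by (metis blinfun_apply_blinfun_compose)

lemma sa_suminf:
  fixes f :: "nat \<Rightarrow> ('a::{real_inner,banach} \<Rightarrow>\<^sub>L 'a)"
  assumes "summable f" "\<And>n. selfadjoint (f n)"
  shows "selfadjoint (suminf f)"
  unfolding selfadjoint_def
proof (intro allI)
  fix x y
  have "inner (suminf f x) y = (\<Sum>n. inner (f n x) y)"
    using bounded_linear.suminf[OF bl_inner1 assms(1)] .
  also have "\<dots> = (\<Sum>n. inner x (f n y))"
    using assms(2) by (simp add: saD)
  also have "\<dots> = inner x (suminf f y)"
    using bounded_linear.suminf[OF bl_inner2 assms(1)] by simp
  finally show "inner (suminf f x) y = inner x (suminf f y)" .
qed

lemma norm_op_pow: "norm (op_pow L n) \<le> norm L ^ n"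
proof (induction n)
  case 0 then show ?case using norm_blinfun_id_le by simp
next
  case (Suc n)
  have "norm (op_pow L (Suc n)) \<le> norm L * norm (op_pow L n)"
    by (simp add: norm_blinfun_compose)
  also have "\<dots> \<le> norm L * norm L ^ n"
    using Suc by (simp add: mult_left_mono)
  finally show ?case by simp
qed

lemma op_pow_commute: "A o\<^sub>L L = L o\<^sub>L A \<Longrightarrow> A o\<^sub>L op_pow L n = op_pow L n o\<^sub>L A"
proof (induction n)
  case 0 then show ?case by simp
next
  case (Suc n)
  have "A o\<^sub>L op_pow L (Suc n) = (A o\<^sub>L L) o\<^sub>L op_pow L n" by (simp add: bc_assoc)
  also have "\<dots> = L o\<^sub>L (A o\<^sub>L op_pow L n)" using Suc by (simp add: bc_assoc)
  also have "\<dots> = op_pow L (Suc n) o\<^sub>L A" using Suc by (simp add: bc_assoc)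
  finally show ?case .
qed

lemma sa_op_pow: "selfadjoint L \<Longrightarrow> selfadjoint (op_pow L n)"
proof (induction n)
  case 0 then show ?case by (simp add: sa_id)
next
  case (Suc n)
  then show ?case
    by (simp add: sa_compose op_pow_commute)
qed

lemma op_exp_summable: "summable (\<lambda>n. (1 / fact n) *\<^sub>R op_pow (L::'a::banach \<Rightarrow>\<^sub>L 'a) n)"
proof (rule summable_comparison_test)
  show "\<exists>N. \<forall>n\<ge>N. norm ((1 / fact n) *\<^sub>R op_pow L n) \<le> inverse (fact n) * norm L ^ n"
    using norm_op_pow
    by (auto intro!: exI[of _ 0] mult_left_mono simp: divide_inverse)
  show "summable (\<lambda>n. inverse (fact n) * norm L ^ n)"
    by (rule summable_exp)
qed

lemma op_exp_sums: "(\<lambda>n. (1 / fact n) *\<^sub>R op_pow (L::'a::banach \<Rightarrow>\<^sub>L 'a) n) sums op_exp L"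
  unfolding op_exp_def using op_exp_summable by (rule summable_sums)

lemma op_exp_commute:
  fixes L A :: "'a::banach \<Rightarrow>\<^sub>L 'a"
  assumes "A o\<^sub>L L = L o\<^sub>L A"
  shows "A o\<^sub>L op_exp L = op_exp L o\<^sub>L A"
proof -
  have "(\<lambda>n. A o\<^sub>L ((1 / fact n) *\<^sub>R op_pow L n)) sums (A o\<^sub>L op_exp L)"
    by (rule bounded_linear.sums[OF bl_compose_left op_exp_sums])
  moreover have "(\<lambda>n. ((1 / fact n) *\<^sub>R op_pow L n) o\<^sub>L A) sums (op_exp L o\<^sub>L A)"
    by (rule bounded_linear.sums[OF bl_compose_right op_exp_sums])
  moreover have "A o\<^sub>L ((1 / fact n) *\<^sub>R op_pow L n) = ((1 / fact n) *\<^sub>R op_pow L n) o\<^sub>L A" for n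
    using op_pow_commute[OF assms] by (simp add: bc_scaleR_left bc_scaleR_right)
  ultimately show ?thesis by (simp add: sums_unique2)
qed

lemma sa_op_exp:
  fixes L :: "'a::{real_inner,banach} \<Rightarrow>\<^sub>L 'a"
  assumes "selfadjoint L"
  shows "selfadjoint (op_exp L)"
  unfolding op_exp_def
  by (rule sa_suminf[OF op_exp_summable]) (simp add: sa_scaleR sa_op_pow assms)

section \<open>Numerical radius and inverses\<close>

lemma parallelogram: "(norm (x + y))\<^sup>2 + (norm (x - y))\<^sup>2 = 2 * (norm x)\<^sup>2 + 2 * (norm (y::'a::real_inner))\<^sup>2"
  by (simp add: power2_norm_eq_inner inner_add_left inner_add_right inner_diff_left inner_diff_right inner_commute)

lemma sa_norm_le:
  fixes S :: "'a::real_inner \<Rightarrow>\<^sub>L 'a"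
  assumes sa: "selfadjoint S" and w: "0 \<le> w" and q: "\<And>x. \<bar>inner (S x) x\<bar> \<le> w * (norm x)\<^sup>2"
  shows "norm S \<le> w"
proof (rule norm_blinfun_bound[OF w])
  fix x
  show "norm (S x) \<le> w * norm x"
  proof (cases "S x = 0 \<or> x = 0")
    case True then show ?thesis using w by auto
  next
    case False
    then have nx: "norm x > 0" and nS: "norm (S x) > 0" by auto
    define y where "y = (norm x / norm (S x)) *\<^sub>R S x"
    have ny: "norm y = norm x" using nS by (simp add: y_def)
    have sxy: "inner (S x) y = norm x * norm (S x)"
      using nS by (simp add: y_def power2_norm_eq_inner[symmetric] power2_eq_square)
    have syx: "inner (S y) x = inner (S x) y"
      using saD[OF sa, of y x] by (simp add: inner_commute)
    have "inner (S (x + y)) (x + y) - inner (S (x - y)) (x - y) = 4 * inner (S x) y"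
      using syx by (simp add: blinfun.bilinear_simps inner_add_left inner_add_right inner_diff_left inner_diff_right)
    then have "4 * inner (S x) y \<le> \<bar>inner (S (x + y)) (x + y)\<bar> + \<bar>inner (S (x - y)) (x - y)\<bar>"
      by linarith
    also have "\<dots> \<le> w * (norm (x + y))\<^sup>2 + w * (norm (x - y))\<^sup>2"
      by (intro add_mono q)
    also have "\<dots> = w * ((norm (x + y))\<^sup>2 + (norm (x - y))\<^sup>2)"
      by (simp add: distrib_left)
    also have "\<dots> = w * (4 * (norm x)\<^sup>2)"
      using parallelogram[of x y] ny by simp
    finally have "norm x * norm (S x) \<le> norm x * (w * norm x)"
      using sxy by (simp add: power2_eq_square algebra_simps)
    then show ?thesis using nx by simp
  qed
qed

lemma op_ge_scalarD: "op_ge_scalar A c \<Longrightarrow> inner (A x) x \<ge> c * (norm x)\<^sup>2"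
  by (simp add: op_ge_scalar_def)

lemma op_ge_scalar_mono: "op_ge_scalar A c \<Longrightarrow> c' \<le> c \<Longrightarrow> op_ge_scalar A c'"
  unfolding op_ge_scalar_def by (meson mult_right_mono order_trans zero_le_power2)

lemma inverse_norm_bound:
  fixes T S :: "'a::real_inner \<Rightarrow>\<^sub>L 'a"
  assumes "T o\<^sub>L S = id_blinfun" "op_ge_scalar T c" "c > 0"
  shows "norm S \<le> 1 / c"
proof (rule norm_blinfun_bound)
  show "0 \<le> 1 / c" using assms by simp
  fix y
  define x where "x = S y"
  have Tx: "T x = y" using assms(1) unfolding x_def by (metis blinfun_apply_blinfun_compose blinfun_apply_id_blinfun)
  have "c * (norm x)\<^sup>2 \<le> inner (T x) x" using op_ge_scalarD[OF assms(2)] .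
  also have "\<dots> \<le> norm y * norm x" using Tx Cauchy_Schwarz_ineq2[of y x] by simp
  finally have "c * norm x \<le> norm y"
    by (cases "x = 0") (auto simp: power2_eq_square)
  then show "norm (S y) \<le> 1 / c * norm y"
    using assms(3) unfolding x_def by (simp add: field_simps)
qed

lemma neumann:
  fixes E :: "'a::banach \<Rightarrow>\<^sub>L 'a"
  assumes "norm E < 1"
  shows "\<exists>N. (id_blinfun - E) o\<^sub>L N = id_blinfun \<and> N o\<^sub>L (id_blinfun - E) = id_blinfun"
proof -
  have sm: "summable (\<lambda>n. op_pow E n)"
  proof (rule summable_comparison_test)
    show "\<exists>N. \<forall>n\<ge>N. norm (op_pow E n) \<le> norm E ^ n" using norm_op_pow by auto
    show "summable (\<lambda>n. norm E ^ n)" using assms by (simp add: summable_geometric)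
  qed
  have lim: "(\<lambda>n. op_pow E n) \<longlonglongrightarrow> 0"
  proof (rule tendsto_norm_zero_cancel, rule Lim_null_comparison)
    show "\<forall>\<^sub>F n in sequentially. norm (norm (op_pow E n)) \<le> norm E ^ n" by (intro always_eventually allI) (simp add: norm_op_pow)
    show "(\<lambda>n. norm E ^ n) \<longlonglongrightarrow> 0" using assms by (simp add: LIMSEQ_power_zero)
  qed
  have tel: "(\<lambda>n. op_pow E n - op_pow E (Suc n)) sums (op_pow E 0 - 0)"
    by (rule telescope_sums'[OF lim])
  have s1: "(\<lambda>n. (id_blinfun - E) o\<^sub>L op_pow E n) sums ((id_blinfun - E) o\<^sub>L suminf (op_pow E))"
    by (rule bounded_linear.sums[OF bl_compose_left summable_sums[OF sm]])
  have s2: "(\<lambda>n. op_pow E n o\<^sub>L (id_blinfun - E)) sums (suminf (op_pow E) o\<^sub>L (id_blinfun - E))"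
    by (rule bounded_linear.sums[OF bl_compose_right summable_sums[OF sm]])
  have e1: "(id_blinfun - E) o\<^sub>L op_pow E n = op_pow E n - op_pow E (Suc n)" for n
    by (simp add: bc_simps)
  have e2: "op_pow E n o\<^sub>L (id_blinfun - E) = op_pow E n - op_pow E (Suc n)" for n
    using op_pow_commute[of E E n] by (simp add: bc_simps)
  show ?thesis
    using s1 s2 tel e1 e2 by (intro exI[of _ "suminf (op_pow E)"]) (auto simp: sums_unique2)
qed

lemma coercive_invertible:
  fixes T :: "'a::{real_inner,banach} \<Rightarrow>\<^sub>L 'a"
  assumes sa: "selfadjoint T" and ge: "op_ge_scalar T c" and c: "c > 0"
  shows "\<exists>S. S o\<^sub>L T = id_blinfun \<and> T o\<^sub>L S = id_blinfun"
proof -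
  define M where "M = norm T + c"
  have M: "M > 0" "c \<le> M" unfolding M_def using c norm_ge_zero[of T] by linarith+
  define E where "E = id_blinfun - (1 / M) *\<^sub>R T"
  have saE: "selfadjoint E" unfolding E_def by (intro sa_diff sa_id sa_scaleR sa)
  have "norm E \<le> 1 - c / M"
  proof (rule sa_norm_le[OF saE])
    show "0 \<le> 1 - c / M" using M by simp
    fix x
    have ix: "inner (E x) x = (norm x)\<^sup>2 - inner (T x) x / M"
      by (simp add: E_def blinfun.bilinear_simps inner_diff_left power2_norm_eq_inner)
    have l: "c * (norm x)\<^sup>2 \<le> inner (T x) x" using op_ge_scalarD[OF ge] .
    have "inner (T x) x \<le> norm (T x) * norm x" by (rule norm_cauchy_schwarz)
    also have "\<dots> \<le> norm T * norm x * norm x" using norm_blinfun[of T x] by (simp add: mult_right_mono)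
    also have "\<dots> \<le> M * (norm x)\<^sup>2" using c by (simp add: M_def power2_eq_square algebra_simps)
    finally have u: "inner (T x) x \<le> M * (norm x)\<^sup>2" .
    have "inner (T x) x / M \<le> (norm x)\<^sup>2" using u M by (simp add: field_simps)
    moreover have "c * (norm x)\<^sup>2 / M \<le> inner (T x) x / M" using l M by (simp add: divide_right_mono)
    ultimately show "\<bar>inner (E x) x\<bar> \<le> (1 - c / M) * (norm x)\<^sup>2"
      unfolding ix by (simp add: algebra_simps abs_le_iff)
  qed
  also have "\<dots> < 1" using M c by simp
  finally obtain N where N: "(id_blinfun - E) o\<^sub>L N = id_blinfun" "N o\<^sub>L (id_blinfun - E) = id_blinfun"
    using neumann by blast
  have T: "T = M *\<^sub>R (id_blinfun - E)" using M by (simp add: E_def)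
  show ?thesis
    using N M by (intro exI[of _ "(1 / M) *\<^sub>R N"]) (simp add: T bc_scaleR_left bc_scaleR_right)
qed



definition oinv :: "('a::real_normed_vector \<Rightarrow>\<^sub>L 'a) \<Rightarrow> ('a \<Rightarrow>\<^sub>L 'a)" where
  "oinv T = (THE S. S o\<^sub>L T = id_blinfun \<and> T o\<^sub>L S = id_blinfun)"

lemma oinv_eq:
  assumes "S o\<^sub>L T = id_blinfun" "T o\<^sub>L S = id_blinfun"
  shows "oinv T = S"
  unfolding oinv_def
proof (rule the_equality)
  show "S o\<^sub>L T = id_blinfun \<and> T o\<^sub>L S = id_blinfun" using assms by simp
  fix S' assume "S' o\<^sub>L T = id_blinfun \<and> T o\<^sub>L S' = id_blinfun"
  then have S': "S' o\<^sub>L T = id_blinfun" by simp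
  have "S' = S' o\<^sub>L (T o\<^sub>L S)" using assms by simp
  also have "\<dots> = (S' o\<^sub>L T) o\<^sub>L S" by (simp add: bc_assoc)
  also have "\<dots> = S" using S' by simp
  finally show "S' = S" .
qed

lemma oinv_id: "oinv id_blinfun = id_blinfun"
  by (rule oinv_eq) simp_all

definition good :: "real \<Rightarrow> ('a::{real_inner,banach} \<Rightarrow>\<^sub>L 'a) \<Rightarrow> bool" where
  "good c T \<longleftrightarrow> selfadjoint T \<and> op_ge_scalar T c \<and> 0 < c"

lemma good_inv:
  assumes "good c T"
  shows "oinv T o\<^sub>L T = id_blinfun" "T o\<^sub>L oinv T = id_blinfun"
proof -
  obtain S where "S o\<^sub>L T = id_blinfun" "T o\<^sub>L S = id_blinfun"
    using coercive_invertible assms unfolding good_def by blast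
  then show "oinv T o\<^sub>L T = id_blinfun" "T o\<^sub>L oinv T = id_blinfun"
    using oinv_eq by auto
qed

lemma good_inv_norm: "good c T \<Longrightarrow> norm (oinv T) \<le> 1 / c"
  using inverse_norm_bound good_inv unfolding good_def by blast

lemma inv_sa:
  assumes "selfadjoint T" "S o\<^sub>L T = id_blinfun" "T o\<^sub>L S = id_blinfun"
  shows "selfadjoint S"
  unfolding selfadjoint_def
proof (intro allI)
  fix x y
  have "inner (S x) y = inner (S x) (T (S y))"
    using assms(3) by (metis blinfun_apply_blinfun_compose blinfun_apply_id_blinfun)
  also have "\<dots> = inner (T (S x)) (S y)" using saD[OF assms(1)] by simp
  also have "\<dots> = inner x (S y)"
    using assms(3) by (metis blinfun_apply_blinfun_compose blinfun_apply_id_blinfun)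
  finally show "inner (S x) y = inner x (S y)" .
qed

lemma good_inv_sa: "good c T \<Longrightarrow> selfadjoint (oinv T)"
  using inv_sa good_inv unfolding good_def by blast

lemma inv_commute:
  assumes "S o\<^sub>L T = id_blinfun" "T o\<^sub>L S = id_blinfun" "X o\<^sub>L T = T o\<^sub>L X"
  shows "X o\<^sub>L S = S o\<^sub>L X"
proof -
  have "X o\<^sub>L S = (S o\<^sub>L T) o\<^sub>L X o\<^sub>L S" using assms by simp
  also have "\<dots> = S o\<^sub>L (X o\<^sub>L T) o\<^sub>L S" using assms(3) by (simp add: bc_assoc)
  also have "\<dots> = S o\<^sub>L X" using assms(2) by (simp add: bc_assoc)
  finally show ?thesis .
qed

lemma good_inv_commute: "good c T \<Longrightarrow> X o\<^sub>L T = T o\<^sub>L X \<Longrightarrow> X o\<^sub>L oinv T = oinv T o\<^sub>L X"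
  using inv_commute good_inv by blast

lemma inv_diff:
  fixes S1 T1 S2 T2 :: "'a::real_normed_vector \<Rightarrow>\<^sub>L 'a"
  assumes "S1 o\<^sub>L T1 = id_blinfun" "T2 o\<^sub>L S2 = id_blinfun"
  shows "S1 - S2 = S1 o\<^sub>L ((T2 - T1) o\<^sub>L S2)"
proof -
  have "S1 o\<^sub>L ((T2 - T1) o\<^sub>L S2) = (S1 o\<^sub>L (T2 o\<^sub>L S2)) - ((S1 o\<^sub>L T1) o\<^sub>L S2)"
    by (simp add: bc_simps)
  then show ?thesis using assms by simp
qed

lemma norm_compose3: "norm (A o\<^sub>L (B o\<^sub>L C)) \<le> norm A * norm B * norm C"
proof -
  have "norm (A o\<^sub>L (B o\<^sub>L C)) \<le> norm A * norm (B o\<^sub>L C)" by (rule norm_blinfun_compose)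
  also have "\<dots> \<le> norm A * (norm B * norm C)" by (intro mult_left_mono norm_blinfun_compose) auto
  finally show ?thesis by (simp add: mult.assoc)
qed

section \<open>The resolvent path\<close>

definition Mt :: "real \<Rightarrow> ('a::real_normed_vector \<Rightarrow>\<^sub>L 'a) \<Rightarrow> ('a \<Rightarrow>\<^sub>L 'a)" where
  "Mt t Y = id_blinfun + t *\<^sub>R (Y - id_blinfun)"

definition Rt :: "real \<Rightarrow> ('a::real_normed_vector \<Rightarrow>\<^sub>L 'a) \<Rightarrow> ('a \<Rightarrow>\<^sub>L 'a)" where
  "Rt t Y = oinv (Mt t Y)"

definition Lam :: "('a::{real_inner,banach} \<Rightarrow>\<^sub>L 'a) \<Rightarrow> ('a \<Rightarrow>\<^sub>L 'a)" where
  "Lam Y = integral {0..1} (\<lambda>t. (Y - id_blinfun) o\<^sub>L Rt t Y)"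

lemma good_Mt:
  assumes "good c Y" "c \<le> 1" "0 \<le> t" "t \<le> 1"
  shows "good c (Mt t Y)"
  unfolding good_def
proof (intro conjI)
  show "selfadjoint (Mt t Y)" using assms unfolding Mt_def good_def by (intro sa_add sa_id sa_scaleR sa_diff) auto
  show "0 < c" using assms unfolding good_def by auto
  show "op_ge_scalar (Mt t Y) c"
    unfolding op_ge_scalar_def
  proof
    fix x
    have y: "inner (Y x) x \<ge> c * (norm x)\<^sup>2" using assms(1) unfolding good_def op_ge_scalar_def by auto
    have "inner (Mt t Y x) x = (norm x)\<^sup>2 + t * (inner (Y x) x - (norm x)\<^sup>2)"
      by (simp add: Mt_def blinfun.bilinear_simps inner_add_left inner_diff_left power2_norm_eq_inner)
    moreover have "t * (inner (Y x) x - (norm x)\<^sup>2) \<ge> t * ((c - 1) * (norm x)\<^sup>2)"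
      using y assms(3) by (intro mult_left_mono) (auto simp: algebra_simps)
    moreover have "(1 - c) * (1 - t) * (norm x)\<^sup>2 \<ge> 0" using assms by simp
    ultimately show "c * (norm x)\<^sup>2 \<le> inner (Mt t Y x) x"
      by (simp add: algebra_simps)
  qed
qed

lemma Mt_commute: "X o\<^sub>L Y = Y o\<^sub>L X \<Longrightarrow> X o\<^sub>L Mt t Y = Mt t Y o\<^sub>L X"
  by (simp add: Mt_def bc_simps)

lemma Mt_commute2: "X o\<^sub>L Y = Y o\<^sub>L X \<Longrightarrow> Mt s X o\<^sub>L Mt t Y = Mt t Y o\<^sub>L Mt s X"
  by (simp add: Mt_def bc_simps algebra_simps)

lemma Mt_diff: "Mt s Y - Mt t Y = (s - t) *\<^sub>R (Y - id_blinfun)"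
  by (simp add: Mt_def algebra_simps)

locale goodY =
  fixes c :: real and Y :: "'a::{real_inner,banach} \<Rightarrow>\<^sub>L 'a"
  assumes gY: "good c Y" and c1: "c \<le> 1"
begin

lemma cpos: "c > 0" using gY unfolding good_def by auto

lemma Rt_inv:
  assumes "t \<in> {0..1}"
  shows "Rt t Y o\<^sub>L Mt t Y = id_blinfun" "Mt t Y o\<^sub>L Rt t Y = id_blinfun"
  using good_inv[OF good_Mt[OF gY c1]] assms unfolding Rt_def by auto

lemma Rt_norm: "t \<in> {0..1} \<Longrightarrow> norm (Rt t Y) \<le> 1 / c"
  using good_inv_norm[OF good_Mt[OF gY c1]] unfolding Rt_def by auto

lemma Rt_sa: "t \<in> {0..1} \<Longrightarrow> selfadjoint (Rt t Y)"
  using good_inv_sa[OF good_Mt[OF gY c1]] unfolding Rt_def by auto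

lemma Rt_commute: "t \<in> {0..1} \<Longrightarrow> X o\<^sub>L Y = Y o\<^sub>L X \<Longrightarrow> X o\<^sub>L Rt t Y = Rt t Y o\<^sub>L X"
  using good_inv_commute[OF good_Mt[OF gY c1], of t X] Mt_commute[of X Y t] unfolding Rt_def by auto

lemma Rt_lipschitz:
  assumes "s \<in> {0..1}" "t \<in> {0..1}"
  shows "norm (Rt t Y - Rt s Y) \<le> (norm (Y - id_blinfun) / c^2) * \<bar>t - s\<bar>"
proof -
  have "Rt t Y - Rt s Y = Rt t Y o\<^sub>L ((Mt s Y - Mt t Y) o\<^sub>L Rt s Y)"
    by (rule inv_diff) (use Rt_inv assms in auto)
  also have "\<dots> = (s - t) *\<^sub>R (Rt t Y o\<^sub>L ((Y - id_blinfun) o\<^sub>L Rt s Y))"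
    by (simp add: Mt_diff bc_scaleR_left bc_scaleR_right)
  finally have "norm (Rt t Y - Rt s Y) = \<bar>s - t\<bar> * norm (Rt t Y o\<^sub>L ((Y - id_blinfun) o\<^sub>L Rt s Y))"
    by simp
  also have "\<dots> \<le> \<bar>s - t\<bar> * (1 / c * norm (Y - id_blinfun) * (1 / c))"
    using norm_compose3[of "Rt t Y" "Y - id_blinfun" "Rt s Y"] Rt_norm[OF assms(1)] Rt_norm[OF assms(2)] cpos
    by (intro mult_left_mono order_trans[OF norm_compose3] mult_mono) auto
  finally show ?thesis by (simp add: power2_eq_square abs_minus_commute field_simps)
qed

lemma Rt_continuous: "continuous_on {0..1} (\<lambda>t. Rt t Y)"
proof (rule lipschitz_on_continuous_on)
  show "(norm (Y - id_blinfun) / c^2)-lipschitz_on {0..1} (\<lambda>t. Rt t Y)"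
    by (rule lipschitz_onI) (use Rt_lipschitz in \<open>auto simp: dist_norm dist_real_def\<close>)
qed

lemma Lam_integrable: "(\<lambda>t. (Y - id_blinfun) o\<^sub>L Rt t Y) integrable_on {0..1}"
  by (rule integrable_continuous_interval)
     (rule bounded_linear.continuous_on[OF bl_compose_left Rt_continuous])

lemma Lam_has_integral: "((\<lambda>t. (Y - id_blinfun) o\<^sub>L Rt t Y) has_integral Lam Y) {0..1}"
  unfolding Lam_def using Lam_integrable by (rule integrable_integral)

lemma Rt_zero: "Rt 0 Y = id_blinfun"
  by (simp add: Rt_def Mt_def oinv_id)

lemma Rt_one: "Rt 1 Y = oinv Y"
  by (simp add: Rt_def Mt_def)

end



section \<open>Caratheodory derivatives\<close>

lemma vd_quot:
  fixes f :: "real \<Rightarrow> 'b::real_normed_vector"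
  shows "(f has_vector_derivative D) (at x within S) \<longleftrightarrow> ((\<lambda>y. (f y - f x) /\<^sub>R (y - x)) \<longlongrightarrow> D) (at x within S)"
proof -
  define A where "A y = (1 / norm (y - x)) *\<^sub>R (f y - (f x + (y - x) *\<^sub>R D))" for y
  define B where "B y = (f y - f x) /\<^sub>R (y - x) - D" for y
  have ev: "eventually (\<lambda>y. y \<noteq> x) (at x within S)"
    by (simp add: eventually_at_filter)
  have nAB: "y \<noteq> x \<Longrightarrow> norm (A y) = norm (B y)" for y
  proof -
    assume "y \<noteq> x"
    have "f y - (f x + (y - x) *\<^sub>R D) = (f y - f x) - (y - x) *\<^sub>R D" by simp
    then have "(1 / (y - x)) *\<^sub>R (f y - (f x + (y - x) *\<^sub>R D)) = (1 / (y - x)) *\<^sub>R (f y - f x) - ((1 / (y - x)) * (y - x)) *\<^sub>R D"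
      by (simp only: scaleR_diff_right scaleR_scaleR)
    also have "\<dots> = B y" using \<open>y \<noteq> x\<close> by (simp add: B_def divide_inverse)
    finally have "B y = (1 / (y - x)) *\<^sub>R (f y - (f x + (y - x) *\<^sub>R D))" by simp
    then show ?thesis by (simp add: A_def)
  qed
  have "(f has_vector_derivative D) (at x within S) \<longleftrightarrow> (A \<longlongrightarrow> 0) (at x within S)"
    unfolding has_vector_derivative_def has_derivative_within A_def
    by (simp add: bounded_linear_scaleR_left)
  also have "\<dots> \<longleftrightarrow> ((\<lambda>y. norm (A y)) \<longlongrightarrow> 0) (at x within S)"
    by (rule tendsto_norm_zero_iff[symmetric])
  also have "\<dots> \<longleftrightarrow> ((\<lambda>y. norm (B y)) \<longlongrightarrow> 0) (at x within S)"
    by (rule tendsto_cong) (use ev nAB in \<open>auto elim: eventually_mono\<close>)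
  also have "\<dots> \<longleftrightarrow> (B \<longlongrightarrow> 0) (at x within S)"
    by (rule tendsto_norm_zero_iff)
  also have "\<dots> \<longleftrightarrow> ((\<lambda>y. (f y - f x) /\<^sub>R (y - x)) \<longlongrightarrow> D) (at x within S)"
    unfolding B_def by (rule LIM_zero_iff)
  finally show ?thesis .
qed

lemma carat:
  fixes f g :: "real \<Rightarrow> 'b::real_normed_vector"
  assumes "\<And>y. y \<in> S \<Longrightarrow> f y - f x = (y - x) *\<^sub>R g y" and "continuous (at x within S) g"
  shows "(f has_vector_derivative g x) (at x within S)"
  unfolding vd_quot
proof -
  have ev: "eventually (\<lambda>y. y \<noteq> x \<and> y \<in> S) (at x within S)"
    by (simp add: eventually_at_filter)
  have "(g \<longlongrightarrow> g x) (at x within S)" using assms(2) by (simp add: continuous_within)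
  then show "((\<lambda>y. (f y - f x) /\<^sub>R (y - x)) \<longlongrightarrow> g x) (at x within S)"
    by (rule tendsto_cong[THEN iffD1, rotated]) (use ev assms(1) in \<open>auto elim!: eventually_mono\<close>)
qed

lemma carat_conv:
  fixes f :: "real \<Rightarrow> 'b::real_normed_vector"
  assumes "(f has_vector_derivative D) (at x within S)"
  obtains g where "\<And>y. f y - f x = (y - x) *\<^sub>R g y" "continuous (at x within S) g" "g x = D"
proof -
  define g where "g y = (if y = x then D else (f y - f x) /\<^sub>R (y - x))" for y
  have 1: "f y - f x = (y - x) *\<^sub>R g y" for y by (simp add: g_def)
  have ev: "eventually (\<lambda>y. y \<noteq> x) (at x within S)"
    by (simp add: eventually_at_filter)
  have q: "((\<lambda>y. (f y - f x) /\<^sub>R (y - x)) \<longlongrightarrow> D) (at x within S)" using assms unfolding vd_quot .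
  have ev2: "eventually (\<lambda>y. (f y - f x) /\<^sub>R (y - x) = g y) (at x within S)"
    using ev by (rule eventually_mono) (simp add: g_def)
  have "(g \<longlongrightarrow> D) (at x within S)"
    by (rule tendsto_cong[OF ev2, THEN iffD1, OF q])
  moreover have gx: "g x = D" by (simp add: g_def)
  ultimately have cont: "continuous (at x within S) g" unfolding continuous_within by simp
  show ?thesis by (rule that[OF 1 cont gx])
qed

lemma integral_norm_bound01:
  fixes f :: "real \<Rightarrow> 'b::real_normed_vector"
  assumes "f integrable_on {0..1}" "\<And>t. t \<in> {0..1} \<Longrightarrow> norm (f t) \<le> B"
  shows "norm (integral {0..1} f) \<le> B"
proof -
  have B: "0 \<le> B" using order_trans[OF norm_ge_zero assms(2)[of 0]] by simp
  have "(f has_integral integral {0..1} f) (cbox 0 1)"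
    using assms(1) by (simp add: integrable_integral)
  from has_integral_bound[OF B this] assms(2) show ?thesis by simp
qed

lemma Mt_diff2: "Mt t Y1 - Mt t Y2 = t *\<^sub>R (Y1 - Y2)"
  by (simp add: Mt_def scaleR_diff_right)

definition Kf :: "('a::{real_inner,banach} \<Rightarrow>\<^sub>L 'a) \<Rightarrow> ('a \<Rightarrow>\<^sub>L 'a) \<Rightarrow> ('a \<Rightarrow>\<^sub>L 'a)" where
  "Kf Y1 Y2 = integral {0..1} (\<lambda>t. Rt t Y1 o\<^sub>L Rt t Y2)"

lemma K_integrable:
  assumes "good c Y1" "good c Y2" "c \<le> 1"
  shows "(\<lambda>t. Rt t Y1 o\<^sub>L Rt t Y2) integrable_on {0..1}"
proof -
  interpret A: goodY c Y1 using assms by unfold_locales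
  interpret B: goodY c Y2 using assms by unfold_locales
  show ?thesis
    by (rule integrable_continuous_interval)
       (rule bounded_bilinear.continuous_on[OF bounded_bilinear_blinfun_compose A.Rt_continuous B.Rt_continuous])
qed

lemma scaleR_Rt:
  assumes "good c Y" "c \<le> 1" "t \<in> {0..1}"
  shows "t *\<^sub>R ((Y - id_blinfun) o\<^sub>L Rt t Y) = id_blinfun - Rt t Y"
proof -
  interpret A: goodY c Y using assms by unfold_locales
  have "t *\<^sub>R ((Y - id_blinfun) o\<^sub>L Rt t Y) = (Mt t Y - id_blinfun) o\<^sub>L Rt t Y"
    by (simp add: Mt_def bc_scaleR_left)
  also have "\<dots> = id_blinfun - Rt t Y"
    using A.Rt_inv[OF assms(3)] by (simp add: bc_diff_left)
  finally show ?thesis .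
qed

lemma Lam_pointwise:
  assumes g1: "good c Y1" and g2: "good c Y2" and c1: "c \<le> 1" and comm: "Y1 o\<^sub>L Y2 = Y2 o\<^sub>L Y1"
    and t: "t \<in> {0..1}"
  shows "((Y1 - id_blinfun) o\<^sub>L Rt t Y1) - ((Y2 - id_blinfun) o\<^sub>L Rt t Y2) = (Y1 - Y2) o\<^sub>L (Rt t Y1 o\<^sub>L Rt t Y2)"
proof (cases "t = 0")
  case True then show ?thesis
    using goodY.Rt_zero[of c Y1] goodY.Rt_zero[of c Y2] g1 g2 c1
    by (simp add: goodY_def algebra_simps)
next
  case False
  interpret A: goodY c Y1 using g1 c1 by unfold_locales
  interpret B: goodY c Y2 using g2 c1 by unfold_locales
  have "t *\<^sub>R (((Y1 - id_blinfun) o\<^sub>L Rt t Y1) - ((Y2 - id_blinfun) o\<^sub>L Rt t Y2)) = Rt t Y2 - Rt t Y1"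
    using scaleR_Rt[OF g1 c1 t] scaleR_Rt[OF g2 c1 t] by (simp add: scaleR_diff_right)
  also have "\<dots> = Rt t Y2 o\<^sub>L ((Mt t Y1 - Mt t Y2) o\<^sub>L Rt t Y1)"
    by (rule inv_diff) (use A.Rt_inv[OF t] B.Rt_inv[OF t] in auto)
  also have "\<dots> = t *\<^sub>R (Rt t Y2 o\<^sub>L ((Y1 - Y2) o\<^sub>L Rt t Y1))"
    by (simp only: Mt_diff2 bc_scaleR_left bc_scaleR_right)
  also have "Rt t Y2 o\<^sub>L ((Y1 - Y2) o\<^sub>L Rt t Y1) = (Y1 - Y2) o\<^sub>L (Rt t Y2 o\<^sub>L Rt t Y1)"
  proof -
    have "(Y1 - Y2) o\<^sub>L Y2 = Y2 o\<^sub>L (Y1 - Y2)" using comm by (simp add: bc_simps)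
    then have "(Y1 - Y2) o\<^sub>L Rt t Y2 = Rt t Y2 o\<^sub>L (Y1 - Y2)" using B.Rt_commute[OF t] by blast
    then show ?thesis by (simp add: bc_assoc[symmetric])
  qed
  also have "Rt t Y2 o\<^sub>L Rt t Y1 = Rt t Y1 o\<^sub>L Rt t Y2"
  proof -
    have "Y1 o\<^sub>L Rt t Y2 = Rt t Y2 o\<^sub>L Y1" using B.Rt_commute[OF t] comm by blast
    then have "Rt t Y2 o\<^sub>L Y1 = Y1 o\<^sub>L Rt t Y2" by simp
    then show ?thesis using A.Rt_commute[OF t] by blast
  qed
  finally show ?thesis using False by simp
qed

lemma Lam_diff:
  assumes g1: "good c Y1" and g2: "good c Y2" and c1: "c \<le> 1" and comm: "Y1 o\<^sub>L Y2 = Y2 o\<^sub>L Y1"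
  shows "Lam Y1 - Lam Y2 = (Y1 - Y2) o\<^sub>L Kf Y1 Y2"
proof -
  interpret A: goodY c Y1 using g1 c1 by unfold_locales
  interpret B: goodY c Y2 using g2 c1 by unfold_locales
  have "Lam Y1 - Lam Y2 = integral {0..1} (\<lambda>t. ((Y1 - id_blinfun) o\<^sub>L Rt t Y1) - ((Y2 - id_blinfun) o\<^sub>L Rt t Y2))"
    unfolding Lam_def by (rule integral_diff[symmetric]) (use A.Lam_integrable B.Lam_integrable in auto)
  also have "\<dots> = integral {0..1} (\<lambda>t. (Y1 - Y2) o\<^sub>L (Rt t Y1 o\<^sub>L Rt t Y2))"
    by (rule integral_cong) (rule Lam_pointwise[OF g1 g2 c1 comm])
  also have "\<dots> = (Y1 - Y2) o\<^sub>L Kf Y1 Y2"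
    unfolding Kf_def
    using integral_linear[OF K_integrable[OF g1 g2 c1] bl_compose_left, of "Y1 - Y2"]
    by (simp add: o_def)
  finally show ?thesis .
qed

lemma K_cont:
  assumes g1: "good c Y1" and g2: "good c Y2" and c1: "c \<le> 1"
  shows "norm (Kf Y1 Y2 - Kf Y2 Y2) \<le> norm (Y1 - Y2) / c^3"
proof -
  interpret A: goodY c Y1 using g1 c1 by unfold_locales
  interpret B: goodY c Y2 using g2 c1 by unfold_locales
  have "Kf Y1 Y2 - Kf Y2 Y2 = integral {0..1} (\<lambda>t. (Rt t Y1 o\<^sub>L Rt t Y2) - (Rt t Y2 o\<^sub>L Rt t Y2))"
    unfolding Kf_def by (rule integral_diff[symmetric]) (use K_integrable[OF g1 g2 c1] K_integrable[OF g2 g2 c1] in auto)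
  also have "norm \<dots> \<le> norm (Y1 - Y2) / c^3"
  proof (rule integral_norm_bound01)
    show "(\<lambda>t. (Rt t Y1 o\<^sub>L Rt t Y2) - (Rt t Y2 o\<^sub>L Rt t Y2)) integrable_on {0..1}"
      by (rule integrable_diff) (use K_integrable[OF g1 g2 c1] K_integrable[OF g2 g2 c1] in auto)
    fix t :: real assume t: "t \<in> {0..1}"
    have "Rt t Y1 - Rt t Y2 = Rt t Y1 o\<^sub>L ((Mt t Y2 - Mt t Y1) o\<^sub>L Rt t Y2)"
      by (rule inv_diff) (use A.Rt_inv[OF t] B.Rt_inv[OF t] in auto)
    also have "\<dots> = t *\<^sub>R (Rt t Y1 o\<^sub>L ((Y2 - Y1) o\<^sub>L Rt t Y2))"
      by (simp only: Mt_diff2 bc_scaleR_left bc_scaleR_right)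
    finally have e: "(Rt t Y1 o\<^sub>L Rt t Y2) - (Rt t Y2 o\<^sub>L Rt t Y2) = t *\<^sub>R ((Rt t Y1 o\<^sub>L ((Y2 - Y1) o\<^sub>L Rt t Y2)) o\<^sub>L Rt t Y2)"
      by (simp add: bc_diff_left[symmetric] bc_scaleR_left)
    have "norm ((Rt t Y1 o\<^sub>L ((Y2 - Y1) o\<^sub>L Rt t Y2)) o\<^sub>L Rt t Y2) \<le> norm (Rt t Y1 o\<^sub>L ((Y2 - Y1) o\<^sub>L Rt t Y2)) * norm (Rt t Y2)"
      by (rule norm_blinfun_compose)
    also have "\<dots> \<le> (1 / c * norm (Y2 - Y1) * (1 / c)) * (1 / c)"
      using A.Rt_norm[OF t] B.Rt_norm[OF t] A.cpos
      by (intro mult_mono order_trans[OF norm_compose3]) auto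
    finally have n: "norm ((Rt t Y1 o\<^sub>L ((Y2 - Y1) o\<^sub>L Rt t Y2)) o\<^sub>L Rt t Y2) \<le> norm (Y1 - Y2) / c^3"
      by (simp add: norm_minus_commute power3_eq_cube)
    have "\<bar>t\<bar> \<le> 1" using t by auto
    then have "\<bar>t\<bar> * norm ((Rt t Y1 o\<^sub>L ((Y2 - Y1) o\<^sub>L Rt t Y2)) o\<^sub>L Rt t Y2) \<le> 1 * (norm (Y1 - Y2) / c^3)"
      using n by (intro mult_mono) auto
    then show "norm ((Rt t Y1 o\<^sub>L Rt t Y2) - (Rt t Y2 o\<^sub>L Rt t Y2)) \<le> norm (Y1 - Y2) / c^3"
      unfolding e by simp
  qed
  finally show ?thesis .
qed

lemma K_diag:
  assumes g: "good c Y" and c1: "c \<le> 1"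
  shows "Kf Y Y = oinv Y"
proof -
  interpret A: goodY c Y using g c1 by unfold_locales
  define f where "f t = t *\<^sub>R Rt t Y" for t
  have "((\<lambda>t. Rt t Y o\<^sub>L Rt t Y) has_integral (f 1 - f 0)) {0..1}"
  proof (rule fundamental_theorem_of_calculus)
    show "0 \<le> (1::real)" by simp
    fix x :: real assume x: "x \<in> {0..1}"
    define g where "g y = Rt y Y - x *\<^sub>R (Rt y Y o\<^sub>L ((Y - id_blinfun) o\<^sub>L Rt x Y))" for y
    have "(f has_vector_derivative g x) (at x within {0..1})"
    proof (rule carat)
      fix y :: real assume y: "y \<in> {0..1}"
      have "Rt y Y - Rt x Y = Rt y Y o\<^sub>L ((Mt x Y - Mt y Y) o\<^sub>L Rt x Y)"
        by (rule inv_diff) (use A.Rt_inv[OF x] A.Rt_inv[OF y] in auto)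
      also have "\<dots> = (x - y) *\<^sub>R (Rt y Y o\<^sub>L ((Y - id_blinfun) o\<^sub>L Rt x Y))"
        by (simp add: Mt_diff bc_scaleR_left bc_scaleR_right)
      finally have d: "Rt y Y - Rt x Y = (x - y) *\<^sub>R (Rt y Y o\<^sub>L ((Y - id_blinfun) o\<^sub>L Rt x Y))" .
      have "f y - f x = (y - x) *\<^sub>R Rt y Y + x *\<^sub>R (Rt y Y - Rt x Y)"
        by (simp add: f_def algebra_simps)
      also have "\<dots> = (y - x) *\<^sub>R g y"
        unfolding d g_def by (simp add: algebra_simps)
      finally show "f y - f x = (y - x) *\<^sub>R g y" .
    next
      have "continuous_on {0..1} g"
        unfolding g_def
        by (intro continuous_on_diff A.Rt_continuous continuous_on_scaleR continuous_on_const
            bounded_linear.continuous_on[OF bl_compose_right])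
      then show "continuous (at x within {0..1}) g"
        using x by (simp add: continuous_on_eq_continuous_within)
    qed
    moreover have "g x = Rt x Y o\<^sub>L Rt x Y"
    proof -
      have "Rt x Y o\<^sub>L Rt x Y = Rt x Y o\<^sub>L ((Mt x Y - x *\<^sub>R (Y - id_blinfun)) o\<^sub>L Rt x Y)"
        by (simp add: Mt_def)
      also have "\<dots> = g x"
        using A.Rt_inv[OF x] by (simp add: g_def bc_simps)
      finally show ?thesis by simp
    qed
    ultimately show "(f has_vector_derivative Rt x Y o\<^sub>L Rt x Y) (at x within {0..1})" by simp
  qed
  then have "Kf Y Y = f 1 - f 0" unfolding Kf_def by (rule integral_unique)
  then show ?thesis by (simp add: f_def A.Rt_one)
qed



lemma op_exp_coercive:
  fixes L :: "'a::{real_inner,banach} \<Rightarrow>\<^sub>L 'a"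
  assumes sa: "selfadjoint L"
  shows "op_ge_scalar (op_exp L) (1 / (exp (norm L) + 1)^2)"
  unfolding op_ge_scalar_def
proof
  fix x
  define H where "H = op_exp ((1/2) *\<^sub>R L)"
  define H' where "H' = op_exp (- ((1/2) *\<^sub>R L))"
  have c1: "((1/2) *\<^sub>R L) o\<^sub>L ((1/2) *\<^sub>R L) = ((1/2) *\<^sub>R L) o\<^sub>L ((1/2) *\<^sub>R L)" ..
  have "op_exp ((1/2) *\<^sub>R L + (1/2) *\<^sub>R L) = H o\<^sub>L H"
    unfolding H_def by (rule op_exp_add[OF c1])
  then have HH: "op_exp L = H o\<^sub>L H" by (simp add: scaleR_add_left[symmetric])
  have c2: "(- ((1/2) *\<^sub>R L)) o\<^sub>L ((1/2) *\<^sub>R L) = ((1/2) *\<^sub>R L) o\<^sub>L (- ((1/2) *\<^sub>R L))"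
    by (simp add: bc_minus_left bc_minus_right bc_scaleR_left bc_scaleR_right)
  have "op_exp (- ((1/2) *\<^sub>R L) + (1/2) *\<^sub>R L) = H' o\<^sub>L H"
    unfolding H_def H'_def by (rule op_exp_add[OF c2])
  then have H'H: "H' o\<^sub>L H = id_blinfun" by (simp add: op_exp_zero)
  have saH: "selfadjoint H" unfolding H_def by (intro sa_op_exp sa_scaleR sa)
  define e where "e = exp (norm L) + 1"
  have e: "e > 0" by (simp add: e_def add_pos_nonneg)
  have nH': "norm H' \<le> e"
  proof -
    have "norm H' \<le> exp (norm (- ((1/2) *\<^sub>R L))) + 1" unfolding H'_def by (rule norm_op_exp)
    also have "\<dots> \<le> e" unfolding e_def by simp
    finally show ?thesis .
  qed
  have "x = H' (H x)" using H'H by (metis blinfun_apply_blinfun_compose blinfun_apply_id_blinfun)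
  then have "norm x \<le> norm H' * norm (H x)" by (metis norm_blinfun)
  also have "\<dots> \<le> e * norm (H x)" using nH' by (simp add: mult_right_mono)
  finally have nx: "norm x \<le> e * norm (H x)" .
  have "inner (op_exp L x) x = inner (H x) (H x)"
    using saD[OF saH, of "H x" x] by (simp add: HH)
  also have "\<dots> = (norm (H x))\<^sup>2" by (simp add: power2_norm_eq_inner)
  finally have ix: "inner (op_exp L x) x = (norm (H x))\<^sup>2" .
  have "(norm x)\<^sup>2 \<le> (e * norm (H x))\<^sup>2" using nx by (intro power_mono) auto
  then have "(norm x)\<^sup>2 / e^2 \<le> (norm (H x))\<^sup>2" using e by (simp add: field_simps power_mult_distrib)
  then show "1 / (exp (norm L) + 1)^2 * (norm x)\<^sup>2 \<le> inner (op_exp L x) x"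
    unfolding ix e_def[symmetric] by simp
qed

lemma Lam_deriv:
  fixes Y G :: "real \<Rightarrow> ('a::{real_inner,banach} \<Rightarrow>\<^sub>L 'a)"
  assumes good: "\<And>s. s \<in> S \<Longrightarrow> good c (Y s)" and c1: "c \<le> 1"
    and comm: "\<And>a b. a \<in> S \<Longrightarrow> b \<in> S \<Longrightarrow> Y a o\<^sub>L Y b = Y b o\<^sub>L Y a"
    and x: "x \<in> S"
    and G: "\<And>y. y \<in> S \<Longrightarrow> Y y - Y x = (y - x) *\<^sub>R G y"
    and Gc: "continuous (at x within S) G"
  shows "((\<lambda>s. Lam (Y s)) has_vector_derivative (G x o\<^sub>L oinv (Y x))) (at x within S)"
proof -
  have cpos: "c > 0" using good[OF x] unfolding good_def by auto
  define g where "g y = G y o\<^sub>L Kf (Y y) (Y x)" for y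
  have gx: "g x = G x o\<^sub>L oinv (Y x)"
    unfolding g_def using K_diag[OF good[OF x] c1] by simp
  have "((\<lambda>s. Lam (Y s)) has_vector_derivative g x) (at x within S)"
  proof (rule carat)
    fix y assume y: "y \<in> S"
    have "Lam (Y y) - Lam (Y x) = (Y y - Y x) o\<^sub>L Kf (Y y) (Y x)"
      by (rule Lam_diff[OF good[OF y] good[OF x] c1 comm[OF y x]])
    also have "\<dots> = (y - x) *\<^sub>R g y" by (simp add: G[OF y] g_def bc_scaleR_left)
    finally show "Lam (Y y) - Lam (Y x) = (y - x) *\<^sub>R g y" .
  next
    have ev: "eventually (\<lambda>y. y \<in> S) (at x within S)"
      by (simp add: eventually_at_filter)
    have G0: "(G \<longlongrightarrow> G x) (at x within S)" using Gc by (simp add: continuous_within)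
    have "((\<lambda>y. (y - x) *\<^sub>R G y) \<longlongrightarrow> (x - x) *\<^sub>R G x) (at x within S)"
      by (intro tendsto_intros G0)
    then have "((\<lambda>y. (y - x) *\<^sub>R G y) \<longlongrightarrow> 0) (at x within S)" by simp
    then have Y0: "((\<lambda>y. Y y - Y x) \<longlongrightarrow> 0) (at x within S)"
      by (rule tendsto_cong[THEN iffD1, rotated]) (use ev G in \<open>auto elim!: eventually_mono\<close>)
    have "((\<lambda>y. Kf (Y y) (Y x)) \<longlongrightarrow> Kf (Y x) (Y x)) (at x within S)"
    proof (rule tendsto_norm_zero_cancel[THEN LIM_zero_cancel])
      have "((\<lambda>y. norm (Y y - Y x) / c^3) \<longlongrightarrow> 0 / c^3) (at x within S)"
        using cpos by (intro tendsto_divide tendsto_const tendsto_norm_zero Y0) simp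
      then have lim: "((\<lambda>y. norm (Y y - Y x) / c^3) \<longlongrightarrow> 0) (at x within S)" by simp
      have ev3: "eventually (\<lambda>y. norm (norm (Kf (Y y) (Y x) - Kf (Y x) (Y x))) \<le> norm (Y y - Y x) / c^3) (at x within S)"
        using ev
      proof (rule eventually_mono)
        fix y assume "y \<in> S"
        then show "norm (norm (Kf (Y y) (Y x) - Kf (Y x) (Y x))) \<le> norm (Y y - Y x) / c^3"
          using K_cont[OF good[OF \<open>y \<in> S\<close>] good[OF x] c1] by simp
      qed
      show "((\<lambda>y. norm (Kf (Y y) (Y x) - Kf (Y x) (Y x))) \<longlongrightarrow> 0) (at x within S)"
        by (rule Lim_null_comparison[OF ev3 lim])
    qed
    then have "(g \<longlongrightarrow> G x o\<^sub>L Kf (Y x) (Y x)) (at x within S)"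
      unfolding g_def by (intro bounded_bilinear.tendsto[OF bounded_bilinear_blinfun_compose] G0)
    then show "continuous (at x within S) g"
      by (simp add: continuous_within g_def)
  qed
  then show ?thesis using gx by simp
qed

lemma Lam_id: "Lam (id_blinfun :: 'a::{real_inner,banach} \<Rightarrow>\<^sub>L 'a) = 0"
  by (simp add: Lam_def)

lemma Lam_exp:
  fixes L :: "'a::{real_inner,banach} \<Rightarrow>\<^sub>L 'a"
  assumes sa: "selfadjoint L"
  shows "Lam (op_exp L) = L"
proof -
  define c where "c = min 1 (1 / (exp (norm L) + 1)^2)"
  have ep: "exp (norm L) + 1 > 0" by (simp add: add_pos_pos)
  have c1: "c \<le> 1" unfolding c_def by (rule min.cobounded1)
  have cpos: "c > 0" unfolding c_def using ep by simp
  define Y where "Y s = op_exp (s *\<^sub>R L)" for s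
  have good: "good c (Y s)" if s: "s \<in> {0..1}" for s
    unfolding good_def
  proof (intro conjI cpos)
    show "selfadjoint (Y s)" unfolding Y_def by (intro sa_op_exp sa_scaleR sa)
    have "op_ge_scalar (Y s) (1 / (exp (norm (s *\<^sub>R L)) + 1)^2)"
      unfolding Y_def by (intro op_exp_coercive sa_scaleR sa)
    moreover have "c \<le> 1 / (exp (norm (s *\<^sub>R L)) + 1)^2"
    proof -
      have "norm (s *\<^sub>R L) \<le> norm L" using s by (auto intro: mult_left_le_one_le)
      then have "exp (norm (s *\<^sub>R L)) + 1 \<le> exp (norm L) + 1" by simp
      then have "(exp (norm (s *\<^sub>R L)) + 1)^2 \<le> (exp (norm L) + 1)^2"
        by (intro power_mono) (auto simp: add_nonneg_nonneg)
      moreover have p1: "0 < (exp (norm (s *\<^sub>R L)) + 1)^2"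
        by (intro zero_less_power add_pos_pos) simp_all
      moreover have p2: "0 < (exp (norm L) + 1)^2"
        by (intro zero_less_power add_pos_pos) simp_all
      ultimately have "1 / (exp (norm L) + 1)^2 \<le> 1 / (exp (norm (s *\<^sub>R L)) + 1)^2"
        by (intro divide_left_mono mult_pos_pos) auto
      then show ?thesis unfolding c_def by linarith
    qed
    ultimately show "op_ge_scalar (Y s) c" by (rule op_ge_scalar_mono)
  qed
  have comm: "Y a o\<^sub>L Y b = Y b o\<^sub>L Y a" for a b
  proof -
    have ab: "(a *\<^sub>R L) o\<^sub>L (b *\<^sub>R L) = (b *\<^sub>R L) o\<^sub>L (a *\<^sub>R L)"
      by (simp add: bc_scaleR_left bc_scaleR_right)
    have "Y a o\<^sub>L Y b = op_exp (a *\<^sub>R L + b *\<^sub>R L)" unfolding Y_def by (rule op_exp_add[OF ab, symmetric])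
    also have "\<dots> = op_exp (b *\<^sub>R L + a *\<^sub>R L)" by (simp add: add.commute)
    also have "\<dots> = Y b o\<^sub>L Y a" unfolding Y_def by (rule op_exp_add[OF ab[symmetric]])
    finally show ?thesis .
  qed
  define h where "h s = Lam (Y s) - s *\<^sub>R L" for s
  have "((\<lambda>s::real. 0) has_integral (h 1 - h 0)) {0..1}"
  proof (rule fundamental_theorem_of_calculus)
    show "0 \<le> (1::real)" by simp
    fix x :: real assume x: "x \<in> {0..1}"
    obtain G where G: "\<And>y. Y y - Y x = (y - x) *\<^sub>R G y" "continuous (at x within {0..1}) G"
      "G x = op_exp (x *\<^sub>R L) o\<^sub>L L"
      using carat_conv[OF op_exp_deriv[of L x "{0..1}"]] unfolding Y_def by blast
    have "((\<lambda>s. Lam (Y s)) has_vector_derivative (G x o\<^sub>L oinv (Y x))) (at x within {0..1})"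
      by (rule Lam_deriv[OF good c1 comm x G(1) G(2)])
    moreover have "G x o\<^sub>L oinv (Y x) = L"
    proof -
      have "L o\<^sub>L (x *\<^sub>R L) = (x *\<^sub>R L) o\<^sub>L L" by (simp add: bc_scaleR_left bc_scaleR_right)
      then have "L o\<^sub>L Y x = Y x o\<^sub>L L" unfolding Y_def by (rule op_exp_commute)
      then have LY: "Y x o\<^sub>L L = L o\<^sub>L Y x" by simp
      have "G x o\<^sub>L oinv (Y x) = (Y x o\<^sub>L L) o\<^sub>L oinv (Y x)" by (simp add: G(3) Y_def)
      also have "\<dots> = L o\<^sub>L (Y x o\<^sub>L oinv (Y x))" by (simp only: LY bc_assoc)
      also have "\<dots> = L" using good_inv(2)[OF good[OF x]] by simp
      finally show ?thesis .
    qed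
    moreover have "((\<lambda>s. s *\<^sub>R L) has_vector_derivative L) (at x within {0..1})"
      using bounded_linear.has_vector_derivative[OF bounded_linear_scaleR_left has_vector_derivative_id[of "at x within {0..1}"], of L]
      by simp
    ultimately have "(h has_vector_derivative (L - L)) (at x within {0..1})"
      unfolding h_def by (intro has_vector_derivative_diff) auto
    then show "(h has_vector_derivative 0) (at x within {0..1})" by simp
  qed
  then have "h 1 - h 0 = 0" using has_integral_0 has_integral_unique by blast
  moreover have "h 0 = 0" by (simp add: h_def Y_def op_exp_zero Lam_id)
  ultimately show ?thesis by (simp add: h_def Y_def)
qed



lemma sa_integral:
  fixes f :: "real \<Rightarrow> ('a::{real_inner,banach} \<Rightarrow>\<^sub>L 'a)"
  assumes int: "f integrable_on S" and sa: "\<And>t. t \<in> S \<Longrightarrow> selfadjoint (f t)"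
  shows "selfadjoint (integral S f)"
  unfolding selfadjoint_def
proof (intro allI)
  fix x y
  have "inner (integral S f x) y = integral S ((\<lambda>T::'a \<Rightarrow>\<^sub>L 'a. inner (T x) y) \<circ> f)"
    using integral_linear[OF int bl_inner1[of x y]] by simp
  also have "\<dots> = integral S ((\<lambda>T::'a \<Rightarrow>\<^sub>L 'a. inner x (T y)) \<circ> f)"
    by (rule integral_cong) (simp add: saD[OF sa])
  also have "\<dots> = inner x (integral S f y)"
    using integral_linear[OF int bl_inner2[of x y]] by simp
  finally show "inner (integral S f x) y = inner x (integral S f y)" .
qed

lemma comm_integral:
  fixes f :: "real \<Rightarrow> ('a::{real_inner,banach} \<Rightarrow>\<^sub>L 'a)"
  assumes int: "f integrable_on S" and c: "\<And>t. t \<in> S \<Longrightarrow> X o\<^sub>L f t = f t o\<^sub>L X"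
  shows "X o\<^sub>L integral S f = integral S f o\<^sub>L X"
proof -
  have "X o\<^sub>L integral S f = integral S ((\<lambda>T. X o\<^sub>L T) \<circ> f)"
    using integral_linear[OF int bl_compose_left[of X]] by simp
  also have "\<dots> = integral S ((\<lambda>T. T o\<^sub>L X) \<circ> f)"
    by (rule integral_cong) (simp add: c)
  also have "\<dots> = integral S f o\<^sub>L X"
    using integral_linear[OF int bl_compose_right[of X]] by simp
  finally show ?thesis .
qed

context goodY
begin

lemma Ymid_comm: "(Y - id_blinfun) o\<^sub>L Y = Y o\<^sub>L (Y - id_blinfun)"
  by (simp add: bc_simps)

lemma Lam_sa: "selfadjoint (Lam Y)"
  unfolding Lam_def
proof (rule sa_integral[OF Lam_integrable])
  fix t :: real assume t: "t \<in> {0..1}"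
  have saY: "selfadjoint Y" using gY by (simp add: good_def)
  show "selfadjoint ((Y - id_blinfun) o\<^sub>L Rt t Y)"
    by (intro sa_compose sa_diff saY sa_id Rt_sa[OF t] Rt_commute[OF t] Ymid_comm)
qed

lemma Lam_comm:
  assumes XY: "X o\<^sub>L Y = Y o\<^sub>L X"
  shows "X o\<^sub>L Lam Y = Lam Y o\<^sub>L X"
  unfolding Lam_def
proof (rule comm_integral[OF Lam_integrable])
  fix t :: real assume t: "t \<in> {0..1}"
  have XR: "X o\<^sub>L Rt t Y = Rt t Y o\<^sub>L X" by (rule Rt_commute[OF t XY])
  have XYm: "X o\<^sub>L (Y - id_blinfun) = (Y - id_blinfun) o\<^sub>L X" using XY by (simp add: bc_simps)
  have "X o\<^sub>L ((Y - id_blinfun) o\<^sub>L Rt t Y) = (X o\<^sub>L (Y - id_blinfun)) o\<^sub>L Rt t Y" by (simp add: bc_assoc)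
  also have "\<dots> = (Y - id_blinfun) o\<^sub>L (X o\<^sub>L Rt t Y)" by (simp only: XYm bc_assoc)
  also have "\<dots> = ((Y - id_blinfun) o\<^sub>L Rt t Y) o\<^sub>L X" by (simp only: XR bc_assoc)
  finally show "X o\<^sub>L ((Y - id_blinfun) o\<^sub>L Rt t Y) = ((Y - id_blinfun) o\<^sub>L Rt t Y) o\<^sub>L X" .
qed

end

lemma inv_coercive:
  assumes g: "good c T" and nT: "norm T \<le> B" and B: "B > 0"
  shows "inner (oinv T v) v \<ge> (c / B^2) * (norm v)\<^sup>2"
proof -
  define w where "w = oinv T v"
  have v: "v = T w" unfolding w_def using good_inv(2)[OF g] by (metis blinfun_apply_blinfun_compose blinfun_apply_id_blinfun)
  have "norm v \<le> B * norm w" unfolding v using norm_blinfun[of T w] nT by (meson mult_right_mono norm_ge_zero order_trans)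
  then have "(norm v)\<^sup>2 \<le> (B * norm w)\<^sup>2" by (intro power_mono) auto
  then have nv: "(norm v)\<^sup>2 / B^2 \<le> (norm w)\<^sup>2" using B by (simp add: field_simps power_mult_distrib)
  have c: "c > 0" using g by (simp add: good_def)
  have "inner (oinv T v) v = inner w v" by (simp add: w_def)
  also have "\<dots> = inner w (T w)" using v by simp
  also have "\<dots> = inner (T w) w" by (simp add: inner_commute)
  also have "\<dots> \<ge> c * (norm w)\<^sup>2" using g unfolding good_def op_ge_scalar_def by auto
  finally have "c * (norm w)\<^sup>2 \<le> inner (oinv T v) v" .
  moreover have "(c / B^2) * (norm v)\<^sup>2 \<le> c * (norm w)\<^sup>2"
    using mult_left_mono[OF nv, of c] c by (simp add: field_simps)
  ultimately show ?thesis by linarith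
qed

lemma exp_Lam:
  fixes X :: "'a::{real_inner,banach} \<Rightarrow>\<^sub>L 'a"
  assumes gX: "good c X" and c1: "c \<le> 1"
  shows "op_exp (Lam X) = X"
proof -
  interpret GX: goodY c X using gX c1 by unfold_locales
  define L where "L = Lam X"
  have saL: "selfadjoint L" unfolding L_def by (rule GX.Lam_sa)
  have XL: "X o\<^sub>L L = L o\<^sub>L X" unfolding L_def by (rule GX.Lam_comm) simp
  define W where "W = op_exp L"
  have XW: "X o\<^sub>L W = W o\<^sub>L X" unfolding W_def by (rule op_exp_commute[OF XL])
  have saW: "selfadjoint W" unfolding W_def by (rule sa_op_exp[OF saL])
  have saX: "selfadjoint X" using gX by (simp add: good_def)
  have cpos: "c > 0" using gX by (simp add: good_def)
  define cW where "cW = 1 / (exp (norm L) + 1)^2"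
  have ep: "exp (norm L) + 1 > 0" by (simp add: add_pos_pos)
  have cWpos: "cW > 0" unfolding cW_def using ep by simp
  have geW: "op_ge_scalar W cW" unfolding W_def cW_def by (rule op_exp_coercive[OF saL])
  have geX: "op_ge_scalar X c" using gX by (simp add: good_def)
  have LamW: "Lam W = L" unfolding W_def by (rule Lam_exp[OF saL])
  define c' where "c' = min c cW"
  have c'1: "c' \<le> 1" using c1 by (simp add: c'_def)
  have c'pos: "c' > 0" using cpos cWpos by (simp add: c'_def)
  define Y where "Y s = X + s *\<^sub>R (W - X)" for s
  have good: "good c' (Y s)" if s: "s \<in> {0..1}" for s
    unfolding good_def
  proof (intro conjI c'pos)
    show "selfadjoint (Y s)" unfolding Y_def by (intro sa_add sa_scaleR sa_diff saX saW)
    show "op_ge_scalar (Y s) c'"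
      unfolding op_ge_scalar_def
    proof
      fix z
      have e: "inner (Y s z) z = (1 - s) * inner (X z) z + s * inner (W z) z"
        by (simp add: Y_def blinfun.bilinear_simps inner_add_left inner_diff_left algebra_simps)
      have "(1 - s) * (c' * (norm z)\<^sup>2) \<le> (1 - s) * inner (X z) z"
        using s op_ge_scalarD[OF geX, of z] by (intro mult_left_mono) (auto simp: c'_def intro: order_trans[OF mult_right_mono[OF min.cobounded1]])
      moreover have "s * (c' * (norm z)\<^sup>2) \<le> s * inner (W z) z"
        using s op_ge_scalarD[OF geW, of z] by (intro mult_left_mono) (auto simp: c'_def intro: order_trans[OF mult_right_mono[OF min.cobounded2]])
      ultimately show "c' * (norm z)\<^sup>2 \<le> inner (Y s z) z"
        unfolding e by (simp add: algebra_simps)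
    qed
  qed
  have WX': "W o\<^sub>L X = X o\<^sub>L W" using XW by simp
  have comm: "Y a o\<^sub>L Y b = Y b o\<^sub>L Y a" for a b
    by (simp add: Y_def bc_simps algebra_simps WX')
  have Y0: "Y 0 = X" and Y1: "Y 1 = W" by (simp_all add: Y_def)
  have "((\<lambda>s::real. (W - X) o\<^sub>L oinv (Y s)) has_integral (Lam (Y 1) - Lam (Y 0))) {0..1}"
  proof (rule fundamental_theorem_of_calculus)
    show "0 \<le> (1::real)" by simp
    fix x :: real assume x: "x \<in> {0..1}"
    show "((\<lambda>s. Lam (Y s)) has_vector_derivative (W - X) o\<^sub>L oinv (Y x)) (at x within {0..1})"
    proof (rule Lam_deriv[OF good c'1 comm x, where G="\<lambda>_. W - X", simplified])
      fix y :: real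
      show "Y y - Y x = (y - x) *\<^sub>R (W - X)" by (simp add: Y_def algebra_simps)
    qed
  qed
  then have I0: "((\<lambda>s::real. (W - X) o\<^sub>L oinv (Y s)) has_integral 0) {0..1}"
    by (simp add: Y0 Y1 LamW L_def)
  define D where "D = W - X"
  have saD': "selfadjoint D" unfolding D_def by (intro sa_diff saW saX)
  define B where "B = norm X + norm (W - X) + 1"
  have Bpos: "B > 0" unfolding B_def by (simp add: add_nonneg_pos)
  have nY: "norm (Y s) \<le> B" if s: "s \<in> {0..1}" for s
  proof -
    have "norm (Y s) \<le> norm X + norm (s *\<^sub>R (W - X))" unfolding Y_def by (rule norm_triangle_ineq)
    also have "\<dots> \<le> norm X + norm (W - X)" using s by (auto intro: mult_left_le_one_le)
    finally show ?thesis unfolding B_def by simp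
  qed
  have "D z = 0" for z
  proof -
    define k where "k = c' / B^2"
    have kpos: "k > 0" unfolding k_def using c'pos Bpos by simp
    have "((\<lambda>T::'a \<Rightarrow>\<^sub>L 'a. inner (T (D z)) z) \<circ> (\<lambda>s::real. (W - X) o\<^sub>L oinv (Y s)) has_integral inner ((0::'a \<Rightarrow>\<^sub>L 'a) (D z)) z) {0..1}"
      by (rule has_integral_linear[OF I0 bl_inner1])
    then have I1: "((\<lambda>s::real. inner (oinv (Y s) (D z)) (D z)) has_integral 0) {0..1}"
      using saD[OF saD'] by (simp add: o_def D_def)
    have I2: "((\<lambda>s::real. k * (norm (D z))\<^sup>2) has_integral k * (norm (D z))\<^sup>2) {0..1}"
      using has_integral_const_real[of "k * (norm (D z))\<^sup>2" 0 1] by simp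
    have "k * (norm (D z))\<^sup>2 \<le> 0"
    proof (rule has_integral_le[OF I2 I1])
      fix s :: real assume s: "s \<in> {0..1}"
      show "k * (norm (D z))\<^sup>2 \<le> inner (oinv (Y s) (D z)) (D z)"
        unfolding k_def by (rule inv_coercive[OF good[OF s] nY[OF s] Bpos])
    qed
    then have "(norm (D z))\<^sup>2 \<le> 0" using kpos by (simp add: mult_le_0_iff)
    then show "D z = 0" by simp
  qed
  then have "W = X" by (intro blinfun_eqI) (simp add: D_def blinfun.bilinear_simps)
  then show ?thesis by (simp add: W_def L_def)
qed

lemma op_log_eq:
  fixes X :: "'a::{real_inner,banach} \<Rightarrow>\<^sub>L 'a"
  assumes gX: "good c X" and c1: "c \<le> 1"
  shows "op_log X = Lam X"
  unfolding op_log_def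
proof (rule the_equality)
  interpret GX: goodY c X using gX c1 by unfold_locales
  show "selfadjoint (Lam X) \<and> op_exp (Lam X) = X"
    using GX.Lam_sa exp_Lam[OF gX c1] by simp
  fix L assume "selfadjoint L \<and> op_exp L = X"
  then show "L = Lam X" using Lam_exp by metis
qed



lemma norm_BA:
  fixes A B :: "'a::real_inner \<Rightarrow>\<^sub>L 'a"
  assumes saA: "selfadjoint A" and saB: "selfadjoint B"
  shows "norm (B o\<^sub>L A) \<le> norm (A o\<^sub>L B)"
proof (rule norm_blinfun_bound)
  show "0 \<le> norm (A o\<^sub>L B)" by simp
  fix x
  define v where "v = B (A x)"
  have "(norm v)\<^sup>2 = inner (B (A x)) v" by (simp add: v_def power2_norm_eq_inner)
  also have "\<dots> = inner x (A (B v))" using saD[OF saB] saD[OF saA] by simp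
  also have "\<dots> \<le> norm x * norm ((A o\<^sub>L B) v)" using norm_cauchy_schwarz by simp
  also have "\<dots> \<le> norm x * (norm (A o\<^sub>L B) * norm v)" by (intro mult_left_mono norm_blinfun) simp
  finally have "norm v * norm v \<le> norm v * (norm (A o\<^sub>L B) * norm x)" by (simp add: power2_eq_square algebra_simps)
  then have "norm v \<le> norm (A o\<^sub>L B) * norm x" by (cases "norm v = 0") auto
  then show "norm ((B o\<^sub>L A) x) \<le> norm (A o\<^sub>L B) * norm x" by (simp add: v_def)
qed

lemma alg_identity:
  fixes A B P Q S :: "'a::real_normed_vector \<Rightarrow>\<^sub>L 'a"
  assumes hP: "P o\<^sub>L (id_blinfun + t *\<^sub>R A) = id_blinfun" "(id_blinfun + t *\<^sub>R A) o\<^sub>L P = id_blinfun"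
    and hQ: "Q o\<^sub>L (id_blinfun + t *\<^sub>R B) = id_blinfun" "(id_blinfun + t *\<^sub>R B) o\<^sub>L Q = id_blinfun"
    and hS: "S o\<^sub>L (id_blinfun + t *\<^sub>R (A + B)) = id_blinfun" "(id_blinfun + t *\<^sub>R (A + B)) o\<^sub>L S = id_blinfun"
    and hAP: "A o\<^sub>L P = P o\<^sub>L A"
  shows "((A + B) o\<^sub>L S) - (A o\<^sub>L P) - (B o\<^sub>L Q)
    = - (t *\<^sub>R (S o\<^sub>L ((B o\<^sub>L A) o\<^sub>L (P o\<^sub>L Q)))) - t *\<^sub>R (P o\<^sub>L ((A o\<^sub>L B) o\<^sub>L Q))"
proof -
  have step1: "((A + B) o\<^sub>L S) - (B o\<^sub>L Q) = S o\<^sub>L (A o\<^sub>L Q)"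
  proof (cases "t = 0")
    case True
    then have "S = id_blinfun" "Q = id_blinfun" using hS(1) hQ(1) by simp_all
    then show ?thesis by simp
  next
    case False
    have e1: "t *\<^sub>R ((A + B) o\<^sub>L S) = id_blinfun - S"
    proof -
      have "t *\<^sub>R ((A + B) o\<^sub>L S) = ((id_blinfun + t *\<^sub>R (A + B)) - id_blinfun) o\<^sub>L S"
        by (simp add: bc_scaleR_left)
      also have "\<dots> = id_blinfun - S" by (simp only: bc_diff_left hS(2) bc_id_left)
      finally show ?thesis .
    qed
    have e2: "t *\<^sub>R (B o\<^sub>L Q) = id_blinfun - Q"
    proof -
      have "t *\<^sub>R (B o\<^sub>L Q) = ((id_blinfun + t *\<^sub>R B) - id_blinfun) o\<^sub>L Q"
        by (simp add: bc_scaleR_left)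
      also have "\<dots> = id_blinfun - Q" by (simp only: bc_diff_left hQ(2) bc_id_left)
      finally show ?thesis .
    qed
    have e3: "S - Q = S o\<^sub>L (((id_blinfun + t *\<^sub>R B) - (id_blinfun + t *\<^sub>R (A + B))) o\<^sub>L Q)"
      by (rule inv_diff[OF hS(1) hQ(2)])
    also have "\<dots> = - (t *\<^sub>R (S o\<^sub>L (A o\<^sub>L Q)))"
      by (simp add: algebra_simps bc_minus_left bc_minus_right bc_scaleR_left bc_scaleR_right)
    finally have e3: "S - Q = - (t *\<^sub>R (S o\<^sub>L (A o\<^sub>L Q)))" .
    have "t *\<^sub>R (((A + B) o\<^sub>L S) - (B o\<^sub>L Q)) = t *\<^sub>R ((A + B) o\<^sub>L S) - t *\<^sub>R (B o\<^sub>L Q)"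
      by (rule scaleR_diff_right)
    also have "\<dots> = (id_blinfun - S) - (id_blinfun - Q)" by (simp only: e1 e2)
    also have "\<dots> = - (S - Q)" by simp
    also have "\<dots> = t *\<^sub>R (S o\<^sub>L (A o\<^sub>L Q))" by (simp only: e3 minus_minus)
    finally have "t *\<^sub>R (((A + B) o\<^sub>L S) - (B o\<^sub>L Q)) = t *\<^sub>R (S o\<^sub>L (A o\<^sub>L Q))" .
    then show ?thesis using False by simp
  qed
  have step2: "A o\<^sub>L P = (P o\<^sub>L (A o\<^sub>L Q)) + t *\<^sub>R (P o\<^sub>L (A o\<^sub>L (B o\<^sub>L Q)))"
  proof -
    have "A o\<^sub>L P = (P o\<^sub>L A) o\<^sub>L ((id_blinfun + t *\<^sub>R B) o\<^sub>L Q)" by (simp add: hAP hQ(2))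
    also have "\<dots> = (P o\<^sub>L (A o\<^sub>L Q)) + t *\<^sub>R (P o\<^sub>L (A o\<^sub>L (B o\<^sub>L Q)))"
      by (simp add: bc_simps)
    finally show ?thesis .
  qed
  have step3: "S - P = - (t *\<^sub>R (S o\<^sub>L (B o\<^sub>L P)))"
  proof -
    have "S - P = S o\<^sub>L (((id_blinfun + t *\<^sub>R A) - (id_blinfun + t *\<^sub>R (A + B))) o\<^sub>L P)"
      by (rule inv_diff[OF hS(1) hP(2)])
    also have "\<dots> = - (t *\<^sub>R (S o\<^sub>L (B o\<^sub>L P)))"
      by (simp add: algebra_simps bc_minus_left bc_minus_right bc_scaleR_left bc_scaleR_right)
    finally show ?thesis .
  qed
  have step4: "S o\<^sub>L (B o\<^sub>L (P o\<^sub>L (A o\<^sub>L Q))) = S o\<^sub>L ((B o\<^sub>L A) o\<^sub>L (P o\<^sub>L Q))"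
  proof -
    have "P o\<^sub>L (A o\<^sub>L Q) = A o\<^sub>L (P o\<^sub>L Q)" by (simp add: bc_assoc[symmetric] hAP)
    then show ?thesis by (simp add: bc_assoc)
  qed
  have "((A + B) o\<^sub>L S) - (A o\<^sub>L P) - (B o\<^sub>L Q) = (((A + B) o\<^sub>L S) - (B o\<^sub>L Q)) - (A o\<^sub>L P)"
    by (simp add: algebra_simps)
  also have "\<dots> = ((S - P) o\<^sub>L (A o\<^sub>L Q)) - t *\<^sub>R (P o\<^sub>L (A o\<^sub>L (B o\<^sub>L Q)))"
    unfolding step1 step2 by (simp add: bc_diff_left algebra_simps)
  also have "\<dots> = - (t *\<^sub>R (S o\<^sub>L (B o\<^sub>L (P o\<^sub>L (A o\<^sub>L Q))))) - t *\<^sub>R (P o\<^sub>L (A o\<^sub>L (B o\<^sub>L Q)))"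
    unfolding step3 by (simp add: bc_minus_left bc_scaleR_left bc_assoc)
  also have "\<dots> = - (t *\<^sub>R (S o\<^sub>L ((B o\<^sub>L A) o\<^sub>L (P o\<^sub>L Q)))) - t *\<^sub>R (P o\<^sub>L ((A o\<^sub>L B) o\<^sub>L Q))"
    unfolding step4 by (simp add: bc_assoc)
  finally show ?thesis .
qed

lemma good_shift:
  fixes A :: "'a::{real_inner,banach} \<Rightarrow>\<^sub>L 'a"
  assumes "selfadjoint A" "op_ge_scalar A (-1/2)"
  shows "good (1/2) (id_blinfun + A)"
  unfolding good_def
proof (intro conjI)
  show "selfadjoint (id_blinfun + A)" by (intro sa_add sa_id assms)
  show "op_ge_scalar (id_blinfun + A) (1/2)"
    unfolding op_ge_scalar_def
  proof
    fix x
    have "inner ((id_blinfun + A) x) x = (norm x)\<^sup>2 + inner (A x) x"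
      by (simp add: blinfun.bilinear_simps inner_add_left power2_norm_eq_inner)
    then show "1/2 * (norm x)\<^sup>2 \<le> inner ((id_blinfun + A) x) x"
      using op_ge_scalarD[OF assms(2), of x] by simp
  qed
qed simp

lemma Mt_shift: "Mt t (id_blinfun + Z) = id_blinfun + t *\<^sub>R Z"
  by (simp add: Mt_def)

lemma main_estimate:
  fixes A B :: "'a::{real_inner,banach} \<Rightarrow>\<^sub>L 'a"
  assumes saA: "selfadjoint A" and saB: "selfadjoint B"
    and gA: "op_ge_scalar A (-1/2)" and gB: "op_ge_scalar B (-1/2)" and gAB: "op_ge_scalar (A + B) (-1/2)"
  shows "norm (Lam (id_blinfun + (A + B)) - Lam (id_blinfun + A) - Lam (id_blinfun + B)) \<le> 12 * norm (A o\<^sub>L B)"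
proof -
  have g1: "good (1/2) (id_blinfun + A)" by (rule good_shift[OF saA gA])
  have g2: "good (1/2) (id_blinfun + B)" by (rule good_shift[OF saB gB])
  have g3: "good (1/2) (id_blinfun + (A + B))" by (rule good_shift[OF sa_add[OF saA saB] gAB])
  interpret G1: goodY "1/2" "id_blinfun + A" by (rule goodY.intro[OF g1]) simp
  interpret G2: goodY "1/2" "id_blinfun + B" by (rule goodY.intro[OF g2]) simp
  interpret G3: goodY "1/2" "id_blinfun + (A + B)" by (rule goodY.intro[OF g3]) simp
  define P where "P t = Rt t (id_blinfun + A)" for t
  define Q where "Q t = Rt t (id_blinfun + B)" for t
  define S where "S t = Rt t (id_blinfun + (A + B))" for t
  define I where "I t = ((A + B) o\<^sub>L S t) - (A o\<^sub>L P t) - (B o\<^sub>L Q t)" for t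
  have hI: "(I has_integral (Lam (id_blinfun + (A + B)) - Lam (id_blinfun + A) - Lam (id_blinfun + B))) {0..1}"
    using has_integral_diff[OF has_integral_diff[OF G3.Lam_has_integral G1.Lam_has_integral] G2.Lam_has_integral]
    unfolding I_def P_def Q_def S_def by simp
  have "norm (integral {0..1} I) \<le> 12 * norm (A o\<^sub>L B)"
  proof (rule integral_norm_bound01)
    show "I integrable_on {0..1}" using hI by blast
    fix t :: real assume t: "t \<in> {0..1}"
    have AP: "A o\<^sub>L P t = P t o\<^sub>L A"
      unfolding P_def by (rule G1.Rt_commute[OF t]) (simp add: bc_simps)
    have id: "I t = - (t *\<^sub>R (S t o\<^sub>L ((B o\<^sub>L A) o\<^sub>L (P t o\<^sub>L Q t)))) - t *\<^sub>R (P t o\<^sub>L ((A o\<^sub>L B) o\<^sub>L Q t))"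
      unfolding I_def
      by (rule alg_identity)
         (use G1.Rt_inv[OF t] G2.Rt_inv[OF t] G3.Rt_inv[OF t] AP in \<open>simp_all add: P_def Q_def S_def Mt_shift\<close>)
    have nP: "norm (P t) \<le> 2" using G1.Rt_norm[OF t] by (simp add: P_def)
    have nQ: "norm (Q t) \<le> 2" using G2.Rt_norm[OF t] by (simp add: Q_def)
    have nS: "norm (S t) \<le> 2" using G3.Rt_norm[OF t] by (simp add: S_def)
    have nBA: "norm (B o\<^sub>L A) \<le> norm (A o\<^sub>L B)" by (rule norm_BA[OF saA saB])
    have n1: "norm (S t o\<^sub>L ((B o\<^sub>L A) o\<^sub>L (P t o\<^sub>L Q t))) \<le> 8 * norm (A o\<^sub>L B)"
    proof -
      have "norm (S t o\<^sub>L ((B o\<^sub>L A) o\<^sub>L (P t o\<^sub>L Q t))) \<le> norm (S t) * norm (B o\<^sub>L A) * norm (P t o\<^sub>L Q t)"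
        by (rule norm_compose3)
      also have "\<dots> \<le> 2 * norm (A o\<^sub>L B) * (2 * 2)"
      proof -
        have nPQ: "norm (P t o\<^sub>L Q t) \<le> 2 * 2"
          using nP nQ by (intro order_trans[OF norm_blinfun_compose] mult_mono) auto
        show ?thesis using nS nBA nPQ by (intro mult_mono) auto
      qed
      finally show ?thesis by simp
    qed
    have n2: "norm (P t o\<^sub>L ((A o\<^sub>L B) o\<^sub>L Q t)) \<le> 4 * norm (A o\<^sub>L B)"
    proof -
      have "norm (P t o\<^sub>L ((A o\<^sub>L B) o\<^sub>L Q t)) \<le> norm (P t) * norm (A o\<^sub>L B) * norm (Q t)"
        by (rule norm_compose3)
      also have "\<dots> \<le> 2 * norm (A o\<^sub>L B) * 2"
        using nP nQ by (intro mult_mono) auto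
      finally show ?thesis by simp
    qed
    have tt: "\<bar>t\<bar> \<le> 1" using t by auto
    have "norm (I t) \<le> \<bar>t\<bar> * norm (S t o\<^sub>L ((B o\<^sub>L A) o\<^sub>L (P t o\<^sub>L Q t))) + \<bar>t\<bar> * norm (P t o\<^sub>L ((A o\<^sub>L B) o\<^sub>L Q t))"
      unfolding id using norm_triangle_ineq4 by (metis norm_minus_cancel norm_scaleR)
    also have "\<dots> \<le> 1 * (8 * norm (A o\<^sub>L B)) + 1 * (4 * norm (A o\<^sub>L B))"
      using tt n1 n2 by (intro add_mono mult_mono) auto
    finally show "norm (I t) \<le> 12 * norm (A o\<^sub>L B)" by simp
  qed
  then show ?thesis using integral_unique[OF hI] by simp
qed

theorem mainTheorem16:
  "\<exists>C::real. \<forall>(A::'a::{real_inner,banach} \<Rightarrow>\<^sub>L 'a) B.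
     selfadjoint A \<and> selfadjoint B \<and>
     op_ge_scalar A (-1/2) \<and> op_ge_scalar B (-1/2) \<and> op_ge_scalar (A + B) (-1/2) \<longrightarrow>
     norm (op_log (id_blinfun + A + B) - op_log (id_blinfun + A) - op_log (id_blinfun + B))
       \<le> C * norm (A o\<^sub>L B)"
proof (intro exI allI impI)
  fix A B :: "'a \<Rightarrow>\<^sub>L 'a"
  assume h: "selfadjoint A \<and> selfadjoint B \<and>
     op_ge_scalar A (-1/2) \<and> op_ge_scalar B (-1/2) \<and> op_ge_scalar (A + B) (-1/2)"
  then have saA: "selfadjoint A" and saB: "selfadjoint B" and gA: "op_ge_scalar A (-1/2)"
    and gB: "op_ge_scalar B (-1/2)" and gAB: "op_ge_scalar (A + B) (-1/2)" by auto
  have e1: "op_log (id_blinfun + A) = Lam (id_blinfun + A)"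
    by (rule op_log_eq[OF good_shift[OF saA gA]]) simp
  have e2: "op_log (id_blinfun + B) = Lam (id_blinfun + B)"
    by (rule op_log_eq[OF good_shift[OF saB gB]]) simp
  have e3: "op_log (id_blinfun + A + B) = Lam (id_blinfun + (A + B))"
    unfolding add.assoc by (rule op_log_eq[OF good_shift[OF sa_add[OF saA saB] gAB]]) simp
  show "norm (op_log (id_blinfun + A + B) - op_log (id_blinfun + A) - op_log (id_blinfun + B))
       \<le> 12 * norm (A o\<^sub>L B)"
    unfolding e1 e2 e3 by (rule main_estimate[OF saA saB gA gB gAB])
qed

end
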